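(* Let $u_1u_2u_3u_4$ be a geodesic word in $\Gamma_2$ (each $u_j$ a generator) which belongs to $\mathcal R$. Let $y\in\Gamma_2$, $y\ne e$, with $u_1u_2u_3u_4\in\mathcal C(y)$. Then: (1) if $z$ is a word such that $u_1u_2u_3u_4z$ is geodesic, then for every geodesic word $w_1\cdots w_J$ representing $y$, the word $w_1\cdots w_Ju_1u_2u_3u_4z$ is geodesic; (2) $\mathcal C(u_1u_2u_3u_4)=\mathcal C(yu_1u_2u_3u_4)$.
   Context: $\Gamma_2=\langle a,b,c,d\mid aba^{-1}b^{-1}cdc^{-1}d^{-1}\rangle$ with symmetric generating set $A=\{a^{\pm1},b^{\pm1},c^{\pm1},d^{\pm1}\}$ and word length $|\cdot|$. A word in $A$ is geodesic if the element it represents has length equal to the number of letters. The cone type of $x\in\Gamma_2$ is $\mathcal C(x)=\{z\in\Gamma_2:\ |xz|=|x|+|z|\}$; a word belongs to $\mathcal C(x)$ if the element it represents does. A word belongs to $\mathcal R$ if it is a nonempty subword of length at most $4$ of a cyclic permutation of the relator $aba^{-1}b^{-1}cdc^{-1}d^{-1}$ or of its inverse $dcd^{-1}c^{-1}bab^{-1}a^{-1}$; a group element belongs to $\mathcal R$ if it is represented by such a word. *)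

theory Defs
  imports Main
begin

text \<open>Genus-2 surface group as words over the symmetric generating set modulo
  the congruence generated by free cancellation and the relator.\<close>

datatype gen = Ga | Gb | Gc | Gd

type_synonym letter = "gen \<times> bool"   \<comment> \<open>(g, True) = g, (g, False) = g^-1\<close>
type_synonym word = "letter list"

definition linv :: "letter \<Rightarrow> letter" where
  "linv x = (fst x, \<not> snd x)"

definition relator :: word where
  "relator = [(Ga,True),(Gb,True),(Ga,False),(Gb,False),(Gc,True),(Gd,True),(Gc,False),(Gd,False)]"

definition relator_inv :: word where
  "relator_inv = [(Gd,True),(Gc,True),(Gd,False),(Gc,False),(Gb,True),(Ga,True),(Gb,False),(Ga,False)]"

inductive rstep :: "word \<Rightarrow> word \<Rightarrow> bool" where
  free: "rstep (u @ [x, linv x] @ v) (u @ v)"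
| rel:  "rstep (u @ relator @ v) (u @ v)"

definition geq :: "word \<Rightarrow> word \<Rightarrow> bool" where
  "geq = (sup rstep rstep\<inverse>\<inverse>)\<^sup>*\<^sup>*"

definition wlen :: "word \<Rightarrow> nat" where
  "wlen w = (LEAST n. \<exists>v. geq w v \<and> length v = n)"

definition geodesic :: "word \<Rightarrow> bool" where
  "geodesic w \<longleftrightarrow> wlen w = length w"

text \<open>Cone type of the element represented by x, as the set of words representing
  elements of the cone (membership depends only on the represented element).\<close>
definition cone :: "word \<Rightarrow> word set" where
  "cone x = {z. wlen (x @ z) = wlen x + wlen z}"

definition inR :: "word \<Rightarrow> bool" where
  "inR w \<longleftrightarrow> w \<noteq> [] \<and> length w \<le> 4 \<and>
     (\<exists>r \<in> {relator, relator_inv}. \<exists>k p s. rotate k r = p @ w @ s)"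

end

theory Submission
  imports Defs "HOL.Complex_Main"
begin


definition cl :: "('a list \<Rightarrow> 'a list \<Rightarrow> bool) \<Rightarrow> 'a list \<Rightarrow> 'a list \<Rightarrow> bool" where
  "cl R = (sup R R\<inverse>\<inverse>)\<^sup>*\<^sup>*"

lemma cl_refl[simp]: "cl R a a"
  unfolding cl_def by simp

lemma cl_step: "R a b \<Longrightarrow> cl R a b"
  unfolding cl_def by (simp add: r_into_rtranclp)

lemma cl_trans: "cl R a b \<Longrightarrow> cl R b c \<Longrightarrow> cl R a c"
  unfolding cl_def by (rule rtranclp_trans)

lemma cl_sym: "cl R a b \<Longrightarrow> cl R b a"
  unfolding cl_def
proof (induction rule: rtranclp_induct)
  case base then show ?case by simp
next
  case (step y z)
  then have "(sup R R\<inverse>\<inverse>) z y" by auto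
  then show ?case using step(3) by (meson converse_rtranclp_into_rtranclp)
qed

lemma cl_step': "R b a \<Longrightarrow> cl R a b"
  using cl_step cl_sym by metis

lemma cl_ctx:
  assumes ctx: "\<And>a b u v. R a b \<Longrightarrow> R (u@a@v) (u@b@v)" and h: "cl R a b"
  shows "cl R (u@a@v) (u@b@v)"
  using h unfolding cl_def
proof (induction rule: rtranclp_induct)
  case base then show ?case by simp
next
  case (step y z)
  then have "(sup R R\<inverse>\<inverse>) (u@y@v) (u@z@v)" using ctx by auto
  then show ?case using step(3) by (meson rtranclp.rtrancl_into_rtrancl)
qed

lemma cl_app:
  assumes ctx: "\<And>a b u v. R a b \<Longrightarrow> R (u@a@v) (u@b@v)"
    and h1: "cl R a b" and h2: "cl R c d"
  shows "cl R (a@c) (b@d)"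
proof -
  have "cl R ([]@a@c) ([]@b@c)" by (rule cl_ctx[OF ctx h1])
  moreover have "cl R (b@c@[]) (b@d@[])" by (rule cl_ctx[OF ctx h2])
  ultimately show ?thesis using cl_trans by fastforce
qed

definition glen :: "('a list \<Rightarrow> 'a list \<Rightarrow> bool) \<Rightarrow> 'a list \<Rightarrow> nat" where
  "glen E w = (LEAST n. \<exists>v. E w v \<and> length v = n)"

lemma glen_le: "glen (cl R) w \<le> length w"
  unfolding glen_def by (rule Least_le) (rule exI[of _ w], simp)

lemma glen_ex: "\<exists>v. cl R w v \<and> length v = glen (cl R) w"
  unfolding glen_def by (rule LeastI_ex) (rule exI[of _ "length w"], rule exI[of _ w], simp)

lemma glen_le_rep: "cl R w v \<Longrightarrow> glen (cl R) w \<le> length v"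
  unfolding glen_def by (rule Least_le) auto

lemma glen_cong: "cl R w w' \<Longrightarrow> glen (cl R) w = glen (cl R) w'"
proof -
  assume h: "cl R w w'"
  obtain v where v: "cl R w' v" "length v = glen (cl R) w'" using glen_ex by blast
  obtain v' where v': "cl R w v'" "length v' = glen (cl R) w" using glen_ex by blast
  have "glen (cl R) w \<le> glen (cl R) w'" using glen_le_rep[of R w v] cl_trans[OF h v(1)] v(2) by simp
  moreover have "glen (cl R) w' \<le> glen (cl R) w"
    using glen_le_rep[of R w' v'] cl_trans[OF cl_sym[OF h] v'(1)] v'(2) by simp
  ultimately show ?thesis by simp
qed

lemma glen_app:
  assumes ctx: "\<And>a b u v. R a b \<Longrightarrow> R (u@a@v) (u@b@v)"
  shows "glen (cl R) (a@b) \<le> glen (cl R) a + glen (cl R) b"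
proof -
  obtain v where v: "cl R a v" "length v = glen (cl R) a" using glen_ex by blast
  obtain v' where v': "cl R b v'" "length v' = glen (cl R) b" using glen_ex by blast
  have "cl R (a@b) (v@v')" using cl_app[OF ctx v(1) v'(1)] .
  then show ?thesis using glen_le_rep v(2) v'(2) by fastforce
qed

section \<open>The Coxeter group W\<close>

datatype L8 = A0 | A1 | A2 | A3 | A4 | A5 | A6 | A7

fun ix :: "L8 \<Rightarrow> int" where
  "ix A0 = 0" | "ix A1 = 1" | "ix A2 = 2" | "ix A3 = 3"
| "ix A4 = 4" | "ix A5 = 5" | "ix A6 = 6" | "ix A7 = 7"

definition lt :: "int \<Rightarrow> L8" where
  "lt n = (let m = n mod 8 in if m = 0 then A0 else if m = 1 then A1 else if m = 2 then A2
     else if m = 3 then A3 else if m = 4 then A4 else if m = 5 then A5 else if m = 6 then A6 else A7)"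

lemma ix_range: "0 \<le> ix a \<and> ix a < 8" by (cases a) auto

lemma lt_ix[simp]: "lt (ix a) = a" by (cases a) (auto simp: lt_def)

lemma ix_lt[simp]: "ix (lt n) = n mod 8"
proof -
  have "n mod 8 \<in> {0,1,2,3,4,5,6,7}" by auto
  then show ?thesis by (auto simp: lt_def Let_def)
qed

lemma lt_mod[simp]: "lt (n mod 8) = lt n" by (simp add: lt_def)

lemma ix_inj: "ix a = ix b \<Longrightarrow> a = b"
  by (metis lt_ix)

definition adj :: "L8 \<Rightarrow> L8 \<Rightarrow> bool" where
  "adj a b \<longleftrightarrow> (ix b - ix a) mod 8 = 1 \<or> (ix b - ix a) mod 8 = 7"

lemma adj_sym: "adj a b \<Longrightarrow> adj b a"
  by (cases a; cases b) (auto simp: adj_def)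

lemma adj_irrefl: "\<not> adj a a" unfolding adj_def by simp

definition oct :: "L8 \<Rightarrow> L8 \<Rightarrow> L8 list" where
  "oct a b = [a,b,a,b,a,b,a,b]"

inductive wstep :: "L8 list \<Rightarrow> L8 list \<Rightarrow> bool" where
  wfree: "wstep (u @ [a,a] @ v) (u @ v)"
| wrel: "adj a b \<Longrightarrow> wstep (u @ oct a b @ v) (u @ v)"

lemma wstep_ctx: "wstep a b \<Longrightarrow> wstep (u@a@v) (u@b@v)"
proof (induction rule: wstep.induct)
  case (wfree u' a v')
  show ?case using wstep.wfree[of "u@u'" a "v'@v"] by simp
next
  case (wrel a b u' v')
  show ?case using wstep.wrel[OF wrel(1), of "u@u'" "v'@v"] by simp
qed

abbreviation weq where "weq \<equiv> cl wstep"
abbreviation lw where "lw \<equiv> glen weq"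

lemma weq_app: "weq a b \<Longrightarrow> weq c d \<Longrightarrow> weq (a@c) (b@d)"
  by (rule cl_app[of wstep, OF wstep_ctx])

lemma weq_ctx: "weq a b \<Longrightarrow> weq (u@a@v) (u@b@v)"
  by (rule cl_ctx[of wstep, OF wstep_ctx])

lemma lw_app: "lw (a@b) \<le> lw a + lw b"
  by (rule glen_app[of wstep, OF wstep_ctx])

lemma weq_aa: "weq [a,a] []"
  using cl_step[of wstep, OF wstep.wfree[of "[]" a "[]"]] by simp

lemma weq_oct: "adj a b \<Longrightarrow> weq (oct a b) []"
  using cl_step[of wstep, OF wstep.wrel[of a b "[]" "[]"]] by simp

lemma weq_rev_cancel: "weq (w @ rev w) []"
proof (induction w)
  case Nil then show ?case by simp
next
  case (Cons a w)
  have "weq ([a] @ (w @ rev w) @ [a]) ([a] @ [] @ [a])" by (rule weq_ctx[OF Cons])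
  then have "weq ((a # w) @ rev (a # w)) [a,a]" by simp
  then show ?case using weq_aa cl_trans by blast
qed

lemma wstep_rev: "wstep a b \<Longrightarrow> wstep (rev a) (rev b)"
proof (induction rule: wstep.induct)
  case (wfree u a v)
  show ?case using wstep.wfree[of "rev v" a "rev u"] by simp
next
  case (wrel a b u v)
  have "rev (oct a b) = oct b a" by (simp add: oct_def)
  then show ?case using wstep.wrel[OF adj_sym[OF wrel(1)], of "rev v" "rev u"] by simp
qed

lemma weq_rev: "weq a b \<Longrightarrow> weq (rev a) (rev b)"
  unfolding cl_def
proof (induction rule: rtranclp_induct)
  case base then show ?case by simp
next
  case (step y z)
  then have "(sup wstep wstep\<inverse>\<inverse>) (rev y) (rev z)" using wstep_rev by auto
  then show ?case using step(3) by (meson rtranclp.rtrancl_into_rtrancl)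
qed

lemma wstep_par: "wstep a b \<Longrightarrow> even (length a) = even (length b)"
  by (induction rule: wstep.induct) (auto simp: oct_def)

lemma weq_par: "weq a b \<Longrightarrow> even (length a) = even (length b)"
  unfolding cl_def
proof (induction rule: rtranclp_induct)
  case base then show ?case by simp
next
  case (step y z)
  then show ?case using wstep_par by auto
qed

lemma lw_par: "even (lw w) = even (length w)"
  using glen_ex[of wstep w] weq_par by metis

lemma lw_rev: "lw (rev w) = lw w"
proof -
  have a: "lw (rev w) \<le> lw w" if "True" for w
  proof -
    obtain v where v: "weq w v" "length v = lw w" using glen_ex by blast
    show ?thesis using glen_le_rep[OF weq_rev[OF v(1)]] v(2) by simp
  qed
  show ?thesis using a[of w] a[of "rev w"] by simp
qed

lemma lw_snoc: "lw (w@[s]) = lw w + 1 \<or> lw w = lw (w@[s]) + 1"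
proof -
  have 1: "lw (w@[s]) \<le> lw w + 1" using lw_app[of w "[s]"] glen_le[of wstep "[s]"] by simp
  have "weq (w@[s,s]@[]) (w@[]@[])" by (rule weq_ctx[OF weq_aa])
  then have "lw w = lw ((w@[s])@[s])" using glen_cong by (metis append.assoc append_Cons append_Nil append_Nil2)
  also have "\<dots> \<le> lw (w@[s]) + 1" using lw_app[of "w@[s]" "[s]"] glen_le[of wstep "[s]"] by simp
  finally have 2: "lw w \<le> lw (w@[s]) + 1" .
  have "even (lw (w@[s])) \<noteq> even (lw w)" using lw_par[of w] lw_par[of "w@[s]"] by simp
  then have "lw (w@[s]) \<noteq> lw w" by metis
  then show ?thesis using 1 2 by linarith
qed

lemma lw_cons: "lw (s#w) = lw w + 1 \<or> lw w = lw (s#w) + 1"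
  using lw_snoc[of "rev w" s] lw_rev by (metis rev.simps(2) rev_rev_ident)

lemma weq_inv: "weq (w @ v) [] \<Longrightarrow> weq w (rev v)"
proof -
  assume h: "weq (w @ v) []"
  have "weq ((w@v) @ rev v) ([] @ rev v)" by (rule weq_app[OF h]) simp
  moreover have "weq (w @ (v @ rev v)) (w @ [])" by (rule weq_app) (auto simp: weq_rev_cancel)
  ultimately show ?thesis by (metis append_Nil append_Nil2 append_assoc cl_sym cl_trans)
qed



type_synonym vec = "real \<times> real \<times> real"

definition r2 :: real where "r2 = sqrt 2"

lemma r2_sq[simp]: "r2 * r2 = 2" unfolding r2_def by simp
lemma r2_sq'[simp]: "r2 * (r2 * x) = 2 * x" by (simp add: mult.assoc[symmetric])
lemma r2_bounds: "1.4142135 < r2" "r2 < 1.4142136"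
proof -
  have "1.4142135 < sqrt 2" by (rule real_less_rsqrt) (simp add: power2_eq_square)
  then show "1.4142135 < r2" unfolding r2_def .
  have "sqrt 2 < 1.4142136" by (rule real_less_lsqrt) (simp_all add: power2_eq_square)
  then show "r2 < 1.4142136" unfolding r2_def .
qed

definition mu :: real where "mu = 2*r2 - 2"

fun B :: "vec \<Rightarrow> vec \<Rightarrow> real" where
  "B (a1,a2,a3) (b1,b2,b3) = a1*b1 + a2*b2 - mu*a3*b3"

fun vadd :: "vec \<Rightarrow> vec \<Rightarrow> vec" where
  "vadd (a1,a2,a3) (b1,b2,b3) = (a1+b1, a2+b2, a3+b3)"

fun sm :: "real \<Rightarrow> vec \<Rightarrow> vec" where
  "sm c (a1,a2,a3) = (c*a1, c*a2, c*a3)"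

lemma B_zero[simp]: "B (0,0,0) y = 0" "B y (0,0,0) = 0" by (cases y; simp)+

lemma B_sym: "B x y = B y x"
  by (cases x; cases y) (auto simp: algebra_simps)

lemma B_add1: "B (vadd x y) z = B x z + B y z"
  by (cases x; cases y; cases z) (auto simp: algebra_simps)
lemma B_add2: "B z (vadd x y) = B z x + B z y"
  by (cases x; cases y; cases z) (auto simp: algebra_simps)
lemma B_sm1: "B (sm c x) z = c * B x z"
  by (cases x; cases z) (auto simp: algebra_simps)
lemma B_sm2: "B z (sm c x) = c * B z x"
  by (cases x; cases z) (auto simp: algebra_simps)

lemmas B_lin = B_add1 B_add2 B_sm1 B_sm2

lemma vadd_comm: "vadd x y = vadd y x" by (cases x; cases y) auto
lemma vadd_assoc: "vadd (vadd x y) z = vadd x (vadd y z)" by (cases x; cases y; cases z) auto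
lemma sm_add: "sm c (vadd x y) = vadd (sm c x) (sm c y)" by (cases x; cases y) (auto simp: algebra_simps)
lemma sm_sm: "sm c (sm d x) = sm (c*d) x" by (cases x) auto
lemma add_sm: "vadd (sm c x) (sm d x) = sm (c+d) x" by (cases x) (auto simp: algebra_simps)
lemma sm_one[simp]: "sm 1 x = x" by (cases x) auto
lemma sm_zero: "sm 0 x = (0,0,0)" by (cases x) auto
lemma vadd_zero[simp]: "vadd x (0,0,0) = x" "vadd (0,0,0) x = x" by (cases x; auto)+

fun al :: "L8 \<Rightarrow> vec" where
  "al A0 = (1+r2, 0, -1-r2)"
| "al A1 = (1 + r2/2, 1 + r2/2, -1-r2)"
| "al A2 = (0, 1+r2, -1-r2)"
| "al A3 = (-1-r2/2, 1 + r2/2, -1-r2)"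
| "al A4 = (-1-r2, 0, -1-r2)"
| "al A5 = (-1-r2/2, -1-r2/2, -1-r2)"
| "al A6 = (0, -1-r2, -1-r2)"
| "al A7 = (1 + r2/2, -1-r2/2, -1-r2)"

fun q :: "L8 \<Rightarrow> vec" where
  "q A0 = (2-2*r2, 4*r2-6, 1)"
| "q A1 = (4*r2-6, 2-2*r2, 1)"
| "q A2 = (6-4*r2, 2-2*r2, 1)"
| "q A3 = (2*r2-2, 4*r2-6, 1)"
| "q A4 = (2*r2-2, 6-4*r2, 1)"
| "q A5 = (6-4*r2, 2*r2-2, 1)"
| "q A6 = (4*r2-6, 2*r2-2, 1)"
| "q A7 = (2-2*r2, 6-4*r2, 1)"

lemma al_unit: "B (al a) (al a) = 1"
  by (cases a) (auto simp: mu_def algebra_simps)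

lemma al_q_nonneg: "0 \<le> B (al a) (q k)"
  using r2_bounds by (cases a; cases k) (auto simp: mu_def algebra_simps)

definition sg :: "L8 \<Rightarrow> vec \<Rightarrow> vec" where
  "sg a v = vadd v (sm (-2 * B (al a) v) (al a))"

lemma B_sg_al: "B (al a) (sg a v) = - B (al a) v"
  unfolding sg_def by (simp add: B_lin al_unit)

lemma sg_sg[simp]: "sg a (sg a v) = v"
proof -
  have "sg a (sg a v) = vadd (vadd v (sm (-2 * B (al a) v) (al a))) (sm (2 * B (al a) v) (al a))"
    unfolding sg_def[of a "sg a v"] B_sg_al by (simp add: sg_def)
  also have "\<dots> = vadd v (sm 0 (al a))" by (simp add: vadd_assoc add_sm)
  finally show ?thesis by (simp add: sm_zero)
qed

lemma B_sg: "B (sg a x) (sg a y) = B x y"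
  unfolding sg_def by (simp add: B_lin al_unit B_sym[of "al a" y] B_sym[of "al a" x] algebra_simps)

lemma sg_add: "sg a (vadd x y) = vadd (sg a x) (sg a y)"
proof -
  have "sg a (vadd x y) = vadd (vadd x y) (sm (-2 * B (al a) x + -2 * B (al a) y) (al a))"
    unfolding sg_def by (simp add: B_lin algebra_simps)
  also have "\<dots> = vadd (sg a x) (sg a y)"
    unfolding sg_def by (cases x; cases y; cases "al a") (simp add: algebra_simps)
  finally show ?thesis .
qed

lemma sg_sm: "sg a (sm c x) = sm c (sg a x)"
  unfolding sg_def by (cases x; cases "al a") (simp add: B_lin algebra_simps)

primrec rho :: "L8 list \<Rightarrow> vec \<Rightarrow> vec" where
  "rho [] v = v"
| "rho (a#w) v = sg a (rho w v)"

lemma rho_app: "rho (u@w) v = rho u (rho w v)"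
  by (induction u) auto

lemma rho_B: "B (rho w x) (rho w y) = B x y"
  by (induction w) (auto simp: B_sg)

lemma rho_add: "rho w (vadd x y) = vadd (rho w x) (rho w y)"
  by (induction w) (auto simp: sg_add)

lemma rho_sm: "rho w (sm c x) = sm c (rho w x)"
  by (induction w) (auto simp: sg_sm)

lemma rho_rev: "rho (rev w) (rho w v) = v"
  by (induction w arbitrary: v) (auto simp: rho_app)

lemma rho_rev': "rho w (rho (rev w) v) = v"
  using rho_rev[of "rev w"] by simp

lemma stepS: "sg s (vadd v (vadd (sm A (al s)) (sm C (al t)))) =
   vadd v (vadd (sm (- A - 2 * B (al s) v - 2 * C * B (al s) (al t)) (al s)) (sm C (al t)))"
proof -
  have r: "vadd (vadd v (vadd (sm A x) (sm C y))) (sm k x) = vadd v (vadd (sm (A+k) x) (sm C y))"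
    for x y k by (cases v; cases x; cases y) (simp add: algebra_simps)
  have b: "B (al s) (vadd v (vadd (sm A (al s)) (sm C (al t)))) = B (al s) v + A + C * B (al s) (al t)"
    by (simp add: B_lin al_unit)
  show ?thesis unfolding sg_def b r by (simp add: algebra_simps)
qed

lemma stepT: "sg t (vadd v (vadd (sm A (al s)) (sm C (al t)))) =
   vadd v (vadd (sm A (al s)) (sm (- C - 2 * B (al t) v - 2 * A * B (al s) (al t)) (al t)))"
proof -
  have r: "vadd (vadd v (vadd (sm A x) (sm C y))) (sm k y) = vadd v (vadd (sm A x) (sm (C+k) y))"
    for x y k by (cases v; cases x; cases y) (simp add: algebra_simps)
  have b: "B (al t) (vadd v (vadd (sm A (al s)) (sm C (al t)))) = B (al t) v + A * B (al s) (al t) + C"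
    by (simp add: B_lin al_unit B_sym[of "al t" "al s"])
  show ?thesis unfolding sg_def b r by (simp add: algebra_simps)
qed

definition cadj :: real where "cadj = - r2 / 2"

lemma adj_B: "adj a b \<Longrightarrow> B (al a) (al b) = cadj"
  by (cases a; cases b) (auto simp: adj_def cadj_def mu_def field_simps)

lemma rho_oct: assumes "adj s t" shows "rho (oct s t) v = v"
proof -
  have c: "B (al s) (al t) = cadj" using adj_B[OF assms] .
  have st: "s \<noteq> t" using assms adj_irrefl by metis
  have v0: "v = vadd v (vadd (sm 0 (al s)) (sm 0 (al t)))"
    by (cases v; cases "al s"; cases "al t") simp
  have "rho (oct s t) v = rho (oct s t) (vadd v (vadd (sm 0 (al s)) (sm 0 (al t))))"
    using v0 by simp
  also have "\<dots> = vadd v (vadd (sm 0 (al s)) (sm 0 (al t)))"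
    unfolding oct_def by (simp add: stepS stepT c cadj_def algebra_simps)
  finally show ?thesis using v0 by simp
qed

lemma wstep_rho: "wstep a b \<Longrightarrow> rho a = rho b"
proof (induction rule: wstep.induct)
  case (wfree u a v)
  show ?case by (rule ext) (simp add: rho_app)
next
  case (wrel a b u v)
  show ?case by (rule ext) (simp add: rho_app rho_oct[OF wrel(1)])
qed

lemma weq_rho: "weq a b \<Longrightarrow> rho a = rho b"
  unfolding cl_def
proof (induction rule: rtranclp_induct)
  case base then show ?case by simp
next
  case (step y z)
  then show ?case using wstep_rho by auto
qed

definition pos :: "vec \<Rightarrow> bool" where
  "pos x \<longleftrightarrow> x \<noteq> (0,0,0) \<and> (\<forall>k. 0 \<le> B x (q k))"

lemma q_span: assumes "\<forall>k. B x (q k) = 0" shows "x = (0,0,0)"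
proof -
  obtain b1 b2 b3 where x: "x = (b1,b2,b3)" by (cases x) auto
  have mu: "mu \<noteq> 0" using r2_bounds by (simp add: mu_def)
  have e0: "b1*(2-2*r2) + b2*(4*r2-6) - mu*b3 = 0" using assms[rule_format, of A0] by (simp add: x)
  have e4: "b1*(2*r2-2) + b2*(6-4*r2) - mu*b3 = 0" using assms[rule_format, of A4] by (simp add: x)
  have e2: "b1*(6-4*r2) + b2*(2-2*r2) - mu*b3 = 0" using assms[rule_format, of A2] by (simp add: x)
  have "mu * b3 = 0" using e0 e4 by (simp add: algebra_simps)
  then have b3: "b3 = 0" using mu by simp
  have f0: "b1*(2-2*r2) + b2*(4*r2-6) = 0" using e0 b3 by simp
  have f2: "b1*(6-4*r2) + b2*(2-2*r2) = 0" using e2 b3 by simp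
  have "(2-2*r2)*(b1*(2-2*r2) + b2*(4*r2-6)) - (4*r2-6)*(b1*(6-4*r2) + b2*(2-2*r2)) = b1*(80-56*r2)"
    by (simp add: algebra_simps)
  then have "b1 * (80 - 56*r2) = 0" using f0 f2 by simp
  moreover have "80 - 56*r2 \<noteq> 0" using r2_bounds by simp
  ultimately have b1: "b1 = 0" by simp
  have "b2 * (4*r2-6) = 0" using f0 b1 by simp
  moreover have "4*r2-6 \<noteq> 0" using r2_bounds by simp
  ultimately have "b2 = 0" by simp
  then show ?thesis using x b1 b3 by simp
qed

lemma pos_comb:
  assumes "pos x" "pos y" "0 \<le> a" "0 \<le> b" "0 < a + b"
  shows "pos (vadd (sm a x) (sm b y))"
proof -
  have nn: "0 \<le> B (vadd (sm a x) (sm b y)) (q k)" for k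
    using assms unfolding pos_def by (simp add: B_lin)
  have nz: "vadd (sm a x) (sm b y) \<noteq> (0,0,0)"
  proof
    assume z: "vadd (sm a x) (sm b y) = (0,0,0)"
    then have "a * B x (q k) + b * B y (q k) = 0" for k
    proof -
      have "B (vadd (sm a x) (sm b y)) (q k) = 0" using z by simp
      then show ?thesis by (simp add: B_lin)
    qed
    then have h: "a * B x (q k) = 0 \<and> b * B y (q k) = 0" for k
      using assms unfolding pos_def
      by (smt (verit, best) mult_nonneg_nonneg)
    show False
    proof (cases "0 < a")
      case True
      then have "\<forall>k. B x (q k) = 0" using h by simp
      then show False using q_span assms(1) unfolding pos_def by blast
    next
      case False
      then have "0 < b" using assms by simp
      then have "\<forall>k. B y (q k) = 0" using h by simp
      then show False using q_span assms(2) unfolding pos_def by blast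
    qed
  qed
  show ?thesis using nn nz unfolding pos_def by simp
qed

lemma pos_neg: "pos x \<Longrightarrow> \<not> pos (sm (-1) x)"
proof
  assume a: "pos x" "pos (sm (-1) x)"
  have "B x (q k) = 0" for k
  proof -
    have "0 \<le> B x (q k)" "0 \<le> B (sm (-1) x) (q k)" using a unfolding pos_def by auto
    then show ?thesis by (simp add: B_sm1)
  qed
  then have "\<forall>k. B x (q k) = 0" by simp
  then show False using q_span a(1) unfolding pos_def by blast
qed

lemma pos_al: "pos (al a)"
  unfolding pos_def
proof (intro conjI allI)
  show "al a \<noteq> (0,0,0)" using r2_bounds by (cases a) auto
  show "0 \<le> B (al a) (q k)" for k by (rule al_q_nonneg)
qed

lemma pos_center: assumes "pos x" shows "0 < B x (0,0,1)"
proof -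
  have e: "B x (0,0,1) * 8 = B x (q A0) + B x (q A1) + B x (q A2) + B x (q A3)
     + B x (q A4) + B x (q A5) + B x (q A6) + B x (q A7)"
    by (cases x) (simp add: algebra_simps)
  have "\<exists>k. B x (q k) \<noteq> 0" using q_span assms unfolding pos_def by blast
  then obtain k where k1: "B x (q k) \<noteq> 0" by blast
  have nn: "\<And>k. 0 \<le> B x (q k)" using assms unfolding pos_def by auto
  have kp: "B x (q k) > 0" using k1 nn[of k] by linarith
  have i: "0 \<le> B x (q A0)" "0 \<le> B x (q A1)" "0 \<le> B x (q A2)" "0 \<le> B x (q A3)"
     "0 \<le> B x (q A4)" "0 \<le> B x (q A5)" "0 \<le> B x (q A6)" "0 \<le> B x (q A7)" using nn by blast+
  have h: "B x (q kk) > 0 \<Longrightarrow> B x (q A0) + B x (q A1) + B x (q A2) + B x (q A3)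
     + B x (q A4) + B x (q A5) + B x (q A6) + B x (q A7) > 0" for kk
    using i by (cases kk) (simp_all del: q.simps)
  from h[OF kp] e show ?thesis by linarith
qed



definition lc :: "real \<Rightarrow> real \<Rightarrow> L8 \<Rightarrow> L8 \<Rightarrow> vec" where
  "lc A C s t = vadd (sm A (al s)) (sm C (al t))"

lemma lc_T: "sg t (lc A C s t) = lc A (- C - 2 * A * B (al s) (al t)) s t"
  using stepT[of t "(0,0,0)" A s C] unfolding lc_def by simp

lemma lc_S: "sg s (lc A C s t) = lc (- A - 2 * C * B (al s) (al t)) C s t"
  using stepS[of s "(0,0,0)" A C t] unfolding lc_def by simp

lemma al_lc: "al s = lc 1 0 s t"
  unfolding lc_def by (cases "al s"; cases "al t") simp

lemma nonadj_B: "s \<noteq> t \<Longrightarrow> \<not> adj s t \<Longrightarrow> B (al s) (al t) \<le> -1"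
  using r2_bounds by (cases s; cases t) (auto simp: adj_def mu_def field_simps)

fun alt :: "L8 list \<Rightarrow> bool" where
  "alt [] = True"
| "alt [x] = True"
| "alt (x#y#w) = (x \<noteq> y \<and> alt (y#w))"

lemma alt_tl: "alt (x#w) \<Longrightarrow> alt w"
  by (cases w) auto

lemma rank2_nonadj:
  assumes "s \<noteq> t" "\<not> adj s t"
  shows "set x \<subseteq> {s,t} \<Longrightarrow> alt x \<Longrightarrow> (x = [] \<or> last x = t) \<Longrightarrow>
    \<exists>A C. rho x (al s) = lc A C s t \<and> 0 \<le> A \<and> 0 \<le> C \<and>
      (x \<noteq> [] \<and> hd x = t \<longrightarrow> A \<le> C) \<and> ((x = [] \<or> hd x = s) \<longrightarrow> C \<le> A)"
proof (induction x)
  case Nil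
  show ?case by (rule exI[of _ 1], rule exI[of _ 0]) (simp add: al_lc[of s t])
next
  case (Cons h x)
  define c where "c = B (al s) (al t)"
  have c1: "c \<le> -1" using nonadj_B[OF assms] c_def by simp
  show ?case
  proof (cases x)
    case Nil
    then have h: "h = t" using Cons.prems by simp
    have e1: "rho (h#x) (al s) = sg t (lc 1 0 s t)" using Nil h al_lc[of s t] by simp
    have e2: "sg t (lc 1 0 s t) = lc 1 (-2*c) s t" by (simp add: lc_T c_def)
    show ?thesis
      by (rule exI[of _ 1], rule exI[of _ "-2*c"]) (use c1 e1 e2 Nil h assms(1) in simp)
  next
    case (Cons h' x')
    have ih: "\<exists>A C. rho x (al s) = lc A C s t \<and> 0 \<le> A \<and> 0 \<le> C \<and>
      (x \<noteq> [] \<and> hd x = t \<longrightarrow> A \<le> C) \<and> ((x = [] \<or> hd x = s) \<longrightarrow> C \<le> A)"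
      using Cons.IH Cons.prems \<open>x = h' # x'\<close> alt_tl by auto
    then obtain A C where AC: "rho x (al s) = lc A C s t" "0 \<le> A" "0 \<le> C"
      "hd x = t \<longrightarrow> A \<le> C" "hd x = s \<longrightarrow> C \<le> A" using \<open>x = h' # x'\<close> by auto
    have hh: "h \<noteq> hd x" using Cons.prems \<open>x = h' # x'\<close> by simp
    have hx: "hd x \<in> {s,t}" "h \<in> {s,t}" using Cons.prems \<open>x = h' # x'\<close> by auto
    show ?thesis
    proof (cases "h = t")
      case True
      then have "hd x = s" using hh hx by auto
      then have "C \<le> A" using AC by simp
      have m: "A * c \<le> A * -1" by (rule mult_left_mono[OF c1 AC(2)])
      show ?thesis
        by (rule exI[of _ A], rule exI[of _ "- C - 2 * A * c"])
           (use AC \<open>C \<le> A\<close> m True assms(1) in \<open>simp add: lc_T c_def[symmetric]\<close>)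
    next
      case False
      then have hs: "h = s" using hx by auto
      then have "hd x = t" using hh hx by auto
      then have "A \<le> C" using AC by simp
      have m: "C * c \<le> C * -1" by (rule mult_left_mono[OF c1 AC(3)])
      show ?thesis
        by (rule exI[of _ "- A - 2 * C * c"], rule exI[of _ C])
           (use AC \<open>A \<le> C\<close> m hs assms(1) in \<open>simp add: lc_S c_def[symmetric]\<close>)
    qed
  qed
qed

lemma len3_cases: "length x \<le> 3 \<Longrightarrow> x = [] \<or> (\<exists>a. x = [a]) \<or> (\<exists>a b. x = [a,b]) \<or> (\<exists>a b c. x = [a,b,c])"
  by (auto simp: le_Suc_eq length_Suc_conv numeral_3_eq_3)

lemma rank2_adj:
  assumes "adj s t" "set x \<subseteq> {s,t}" "alt x" "x = [] \<or> last x = t" "length x \<le> 3"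
  shows "\<exists>A C. rho x (al s) = lc A C s t \<and> 0 \<le> A \<and> 0 \<le> C"
proof -
  have st: "s \<noteq> t" using assms(1) adj_irrefl by metis
  have c: "B (al s) (al t) = - r2 / 2" using adj_B[OF assms(1)] by (simp add: cadj_def)
  have x: "x = [] \<or> x = [t] \<or> x = [s,t] \<or> x = [t,s,t]"
    using len3_cases[OF assms(5)] assms(2,3,4) st by auto
  have e: "rho x (al s) = rho x (lc 1 0 s t)" using al_lc[of s t] by simp
  have r0: "0 \<le> r2" using r2_bounds by simp
  show ?thesis using x
  proof (elim disjE)
    assume "x = []" then show ?thesis using e by (intro exI[of _ 1] exI[of _ 0]) simp
  next
    assume "x = [t]" then show ?thesis using e r0 by (intro exI[of _ 1] exI[of _ r2]) (simp add: lc_T c)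
  next
    assume "x = [s,t]" then show ?thesis using e r0
      by (intro exI[of _ 1] exI[of _ r2]) (simp add: lc_T lc_S c algebra_simps)
  next
    assume "x = [t,s,t]" then show ?thesis using e r0
      by (intro exI[of _ 1] exI[of _ 0]) (simp add: lc_T lc_S c algebra_simps)
  qed
qed

definition lI :: "L8 \<Rightarrow> L8 \<Rightarrow> L8 list \<Rightarrow> nat" where
  "lI s t x = (LEAST n. \<exists>x'. set x' \<subseteq> {s,t} \<and> weq x x' \<and> length x' = n)"

lemma lI_le_rep: "set x' \<subseteq> {s,t} \<Longrightarrow> weq x x' \<Longrightarrow> lI s t x \<le> length x'"
  unfolding lI_def by (rule Least_le) blast

lemma lI_le: "set x \<subseteq> {s,t} \<Longrightarrow> lI s t x \<le> length x"
  using lI_le_rep[of x s t x] by simp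

lemma lI_ex: "set x \<subseteq> {s,t} \<Longrightarrow> \<exists>x'. set x' \<subseteq> {s,t} \<and> weq x x' \<and> length x' = lI s t x"
  unfolding lI_def by (rule LeastI_ex) (rule exI[of _ "length x"], rule exI[of _ x], simp)

lemma lw_le_lI: "set x \<subseteq> {s,t} \<Longrightarrow> lw x \<le> lI s t x"
  using lI_ex[of x s t] glen_le_rep by fastforce

lemma not_alt: "\<not> alt x \<Longrightarrow> \<exists>u a v. x = u @ [a,a] @ v"
proof (induction x rule: alt.induct)
  case 1 then show ?case by simp
next
  case (2 x) then show ?case by simp
next
  case (3 x y w)
  show ?case
  proof (cases "x = y")
    case True then show ?thesis by (intro exI[of _ "[]"] exI[of _ x] exI[of _ w]) simp
  next
    case False
    then obtain u a v where "y # w = u @ [a,a] @ v" using 3 by auto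
    then show ?thesis by (intro exI[of _ "x#u"] exI[of _ a] exI[of _ v]) simp
  qed
qed

lemma alt_suffix: "alt (y @ z) \<Longrightarrow> alt z"
  by (induction y) (auto dest: alt_tl)

lemma weq_ststs: "adj s t \<Longrightarrow> weq [s,t,s,t,s] [t,s,t]"
proof -
  assume a: "adj s t"
  have "weq ([s,t,s,t,s] @ [t,s,t]) []" using weq_oct[OF a] by (simp add: oct_def)
  then show ?thesis using weq_inv by fastforce
qed

lemma rank2_main:
  assumes st: "s \<noteq> t" and sx: "set x \<subseteq> {s,t}" and le: "lI s t x \<le> lI s t (x@[s])"
  shows "\<exists>A C. rho x (al s) = lc A C s t \<and> 0 \<le> A \<and> 0 \<le> C"
proof -
  obtain x' where x': "set x' \<subseteq> {s,t}" "weq x x'" "length x' = lI s t x" using lI_ex[OF sx] by blast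
  have sxs: "set (x@[s]) \<subseteq> {s,t}" using sx by simp
  have alt: "alt x'"
  proof (rule ccontr)
    assume "\<not> alt x'"
    then obtain u a v where uav: "x' = u @ [a,a] @ v" using not_alt by blast
    have "weq x' (u @ [] @ v)" unfolding uav by (rule weq_ctx[OF weq_aa])
    then have "weq x (u@v)" using x'(2) cl_trans by fastforce
    moreover have "set (u@v) \<subseteq> {s,t}" using x'(1) uav by auto
    ultimately have "lI s t x \<le> length (u@v)" using lI_le_rep by blast
    then show False using x'(3) uav by simp
  qed
  have last: "x' = [] \<or> last x' = t"
  proof (rule ccontr)
    assume "\<not> (x' = [] \<or> last x' = t)"
    then have "x' \<noteq> []" "last x' = s" using x'(1) by (auto dest: last_in_set)
    then obtain y where y: "x' = y @ [s]" by (metis append_butlast_last_id)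
    have "weq (x@[s]) (x'@[s])" by (rule weq_app[OF x'(2)]) simp
    moreover have "weq (x'@[s]) y" using weq_ctx[OF weq_aa, of y s "[]"] y by simp
    ultimately have "weq (x@[s]) y" using cl_trans by blast
    moreover have "set y \<subseteq> {s,t}" using x'(1) y by auto
    ultimately have "lI s t (x@[s]) \<le> length y" using lI_le_rep by blast
    then show False using le x'(3) y by simp
  qed
  have rx: "rho x = rho x'" using weq_rho[OF x'(2)] .
  show ?thesis
  proof (cases "adj s t")
    case False
    then show ?thesis using rank2_nonadj[OF st False x'(1) alt last] rx by auto
  next
    case True
    have "length x' \<le> 3"
    proof (rule ccontr)
      assume "\<not> length x' \<le> 3"
      define y where "y = take (length x' - 4) x'"
      define z where "z = drop (length x' - 4) x'"
      have yz: "x' = y @ z" unfolding y_def z_def by simp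
      have lz: "length z = 4" using \<open>\<not> length x' \<le> 3\<close> unfolding z_def by simp
      then obtain a b c d where z: "z = [a,b,c,d]"
        by (auto simp: length_Suc_conv numeral_eq_Suc)
      have "alt z" using alt yz alt_suffix by metis
      moreover have "d = t" using last yz z by auto
      moreover have "{a,b,c,d} \<subseteq> {s,t}" using x'(1) yz z by auto
      ultimately have z': "z = [s,t,s,t]" using z st by auto
      have "weq (x@[s]) (x'@[s])" by (rule weq_app[OF x'(2)]) simp
      moreover have "weq (x'@[s]) (y@[t,s,t]@[])"
        using weq_ctx[OF weq_ststs[OF True], of y "[]"] yz z' by simp
      ultimately have "weq (x@[s]) (y@[t,s,t])" using cl_trans by fastforce
      moreover have "set (y@[t,s,t]) \<subseteq> {s,t}" using x'(1) yz by auto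
      ultimately have "lI s t (x@[s]) \<le> length (y@[t,s,t])" using lI_le_rep by blast
      then show False using le x'(3) yz z' by simp
    qed
    then show ?thesis using rank2_adj[OF True x'(1) alt last] rx by auto
  qed
qed

section \<open>The positivity theorem\<close>

lemma sg_al_self: "sg a (al a) = sm (-1) (al a)"
proof -
  have "sg a (al a) = vadd (al a) (sm (-2) (al a))" unfolding sg_def by (simp add: al_unit)
  also have "\<dots> = sm (-1) (al a)" by (cases "al a") simp
  finally show ?thesis .
qed

lemma rho_zero: "rho w (0,0,0) = (0,0,0)"
  using rho_sm[of w 0 "(0,0,0)"] by (simp add: sm_zero)

lemma lw_zero: "lw w = 0 \<Longrightarrow> weq w []"
  using glen_ex[of wstep w] by auto

lemma lw_general: "set x \<subseteq> {s,t} \<Longrightarrow> weq w (v@x) \<Longrightarrow> lw w \<le> lw v + lI s t x"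
proof -
  assume a: "set x \<subseteq> {s,t}" "weq w (v@x)"
  have "lw w = lw (v@x)" using glen_cong[OF a(2)] .
  also have "\<dots> \<le> lw v + lw x" by (rule lw_app)
  also have "\<dots> \<le> lw v + lI s t x" using lw_le_lI[OF a(1)] by simp
  finally show ?thesis .
qed

lemma lI_one: "lI s t [t] = 1"
proof -
  have "lI s t [t] \<le> 1" using lI_le[of "[t]" s t] by simp
  moreover have "lI s t [t] \<noteq> 0"
  proof
    assume "lI s t [t] = 0"
    then obtain x' where "weq [t] x'" "length x' = 0" using lI_ex[of "[t]" s t] by auto
    then show False using weq_par by fastforce
  qed
  ultimately show ?thesis by simp
qed

lemma lI_cons: "set x \<subseteq> {s,t} \<Longrightarrow> a \<in> {s,t} \<Longrightarrow> lI s t (a#x) \<le> lI s t x + 1"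
proof -
  assume a: "set x \<subseteq> {s,t}" "a \<in> {s,t}"
  obtain x' where x': "set x' \<subseteq> {s,t}" "weq x x'" "length x' = lI s t x" using lI_ex[OF a(1)] by blast
  have "weq ([a]@x) ([a]@x')" by (rule weq_app[OF _ x'(2)]) simp
  then have "lI s t (a#x) \<le> length (a#x')" using lI_le_rep[of "a#x'" s t "a#x"] x'(1) a(2) by simp
  then show ?thesis using x'(3) by simp
qed

theorem pos_thm: "lw w < lw (w@[s]) \<Longrightarrow> pos (rho w (al s))"
proof (induction "lw w" arbitrary: w s rule: less_induct)
  case less
  show ?case
  proof (cases "lw w = 0")
    case True
    then have "rho w = rho []" using weq_rho lw_zero by blast
    then show ?thesis using pos_al by simp
  next
    case False
    obtain r where r: "weq w r" "length r = lw w" using glen_ex by blast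
    then have "r \<noteq> []" using False by auto
    then obtain r' t where rt: "r = r' @ [t]" by (metis append_butlast_last_id)
    have "weq (w@[t]) (r@[t])" by (rule weq_app[OF r(1)]) simp
    moreover have "weq (r@[t]) r'" using weq_ctx[OF weq_aa, of r' t "[]"] rt by simp
    ultimately have "weq (w@[t]) r'" using cl_trans by blast
    then have wt: "lw (w@[t]) \<le> length r'" using glen_le_rep by blast
    then have wt': "lw (w@[t]) < lw w" using r(2) rt by simp
    have ts: "t \<noteq> s" using wt' less.prems by auto
    have lr1: "lw r' \<le> length r'" by (rule glen_le)
    have "lw w \<le> lw r' + lw [t]" using glen_cong[OF r(1)] lw_app[of r' "[t]"] rt by simp
    then have lr': "lw r' + 1 = lw w" using lr1 r(2) rt glen_le[of wstep "[t]"] by simp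
    define P where "P = (\<lambda>p. set (snd p) \<subseteq> {s,t} \<and> weq w (fst p @ snd p) \<and> lw (fst p) + lI s t (snd p) = lw w)"
    have "P (r', [t])" unfolding P_def using r(1) rt lr' lI_one by simp
    then obtain p where p: "P p" and pmin: "\<And>p'. P p' \<Longrightarrow> lw (fst p) \<le> lw (fst p')"
      using ex_has_least_nat[of P "(r', [t])" "\<lambda>p. lw (fst p)"] by blast
    obtain v x where vx: "p = (v,x)" by (cases p)
    have sx: "set x \<subseteq> {s,t}" and wvx: "weq w (v@x)" and lsum: "lw v + lI s t x = lw w"
      using p vx unfolding P_def by auto
    have vlt: "lw v < lw w" using pmin[OF \<open>P (r', [t])\<close>] vx lr' by simp
    have gen: "\<And>v' x'. set x' \<subseteq> {s,t} \<Longrightarrow> weq w (v'@x') \<Longrightarrow> lw w \<le> lw v' + lI s t x'"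
      using lw_general by blast
    have desc: "lw v < lw (v@[a])" if a: "a \<in> {s,t}" for a
    proof (rule ccontr)
      assume "\<not> lw v < lw (v@[a])"
      then have d: "lw v = lw (v@[a]) + 1" using lw_snoc[of v a] by auto
      have "weq (v@[a,a]@x) (v@[]@x)" by (rule weq_ctx[OF weq_aa])
      then have "weq (v@x) ((v@[a]) @ (a#x))" using cl_sym by fastforce
      then have "weq w ((v@[a]) @ (a#x))" using wvx cl_trans by blast
      moreover have s2: "set (a#x) \<subseteq> {s,t}" using sx a by simp
      ultimately have "lw w \<le> lw (v@[a]) + lI s t (a#x)" using gen by blast
      moreover have "lI s t (a#x) \<le> lI s t x + 1" using lI_cons[OF sx a] .
      ultimately have "P (v@[a], a#x)" unfolding P_def
        using \<open>weq w ((v@[a]) @ (a#x))\<close> s2 d lsum by simp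
      then show False using pmin vx d by fastforce
    qed
    have ps: "pos (rho v (al s))" using less.hyps[of v s] vlt desc[of s] by simp
    have pt: "pos (rho v (al t))" using less.hyps[of v t] vlt desc[of t] by simp
    have lIs: "lI s t x \<le> lI s t (x@[s])"
    proof (rule ccontr)
      assume "\<not> lI s t x \<le> lI s t (x@[s])"
      have "weq (w@[s]) (v@(x@[s]))" using weq_app[OF wvx, of "[s]" "[s]"] by simp
      then have "lw (w@[s]) \<le> lw v + lI s t (x@[s])" using lw_general[of "x@[s]" s t] sx by simp
      then show False using \<open>\<not> lI s t x \<le> lI s t (x@[s])\<close> lsum less.prems by simp
    qed
    obtain A C where AC: "rho x (al s) = lc A C s t" "0 \<le> A" "0 \<le> C"
      using rank2_main[OF ts[symmetric] sx lIs] by blast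
    have "rho w (al s) = rho v (rho x (al s))" using weq_rho[OF wvx] by (simp add: rho_app)
    also have "\<dots> = vadd (sm A (rho v (al s))) (sm C (rho v (al t)))"
      using AC(1) by (simp add: lc_def rho_add rho_sm)
    finally have e: "rho w (al s) = vadd (sm A (rho v (al s))) (sm C (rho v (al t)))" .
    have "0 < A + C"
    proof (rule ccontr)
      assume "\<not> 0 < A + C"
      then have "A = 0" "C = 0" using AC by auto
      then have "rho x (al s) = (0,0,0)" using AC(1) by (simp add: lc_def sm_zero)
      then have "al s = (0,0,0)" using rho_rev[of x "al s"] rho_zero by simp
      then show False using pos_al[of s] unfolding pos_def by simp
    qed
    then show ?thesis using e pos_comb[OF ps pt AC(2) AC(3)] by simp
  qed
qed

lemma neg_thm: "lw (w@[s]) < lw w \<Longrightarrow> pos (sm (-1) (rho w (al s)))"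
proof -
  assume a: "lw (w@[s]) < lw w"
  have "weq ((w@[s])@[s]) w" using weq_ctx[OF weq_aa, of w s "[]"] by simp
  then have "lw ((w@[s])@[s]) = lw w" using glen_cong by blast
  then have "pos (rho (w@[s]) (al s))" using pos_thm[of "w@[s]" s] a by simp
  then show ?thesis by (simp add: rho_app sg_al_self rho_sm)
qed

lemma root_pm: "pos (rho w (al s)) \<or> pos (sm (-1) (rho w (al s)))"
  using pos_thm neg_thm lw_snoc[of w s] by (metis less_add_one)

lemma pos_iff: "pos (rho w (al s)) \<longleftrightarrow> lw w < lw (w@[s])"
  using pos_thm neg_thm lw_snoc[of w s] pos_neg by (metis less_add_one)



section \<open>Concrete geometry at the vertex q A0\<close>

definition AA :: real where "AA = 5 + 4*r2"
definition Da :: vec where "Da = vadd (q A7) (sm (-AA) (q A0))"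
definition Db :: vec where "Db = vadd (q A1) (sm (-AA) (q A0))"

lemma cB: "B (q A0) (q A0) = 82 - 58*r2"
  "B (q A0) Da = 0" "B (q A0) Db = 0"
  "B Da Da = 48 - 32*r2" "B Db Db = 48 - 32*r2" "B Da Db = 24*r2 - 32"
  "B (al A0) (q A0) = 0" "B (al A1) (q A0) = 0"
  "B (al A0) Da = 0" "B (al A1) Db = 0"
  "B (al A1) Da = 4 - 2*r2" "B (al A0) Db = 4 - 2*r2"
  by (simp_all add: Da_def Db_def AA_def mu_def algebra_simps)

lemma vec3_eq: "(a1::real) = b1 \<Longrightarrow> (a2::real) = b2 \<Longrightarrow> (a3::real) = b3 \<Longrightarrow> (a1,a2,a3) = (b1,b2,b3)"
  by simp

lemma I1: "sg A1 (q A7) = vadd (sm AA (q A0)) (vadd (sm r2 Db) (sm (-1) Da))"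
  by (simp add: sg_def Da_def Db_def AA_def mu_def algebra_simps)
lemma I2: "sg A0 (q A1) = vadd (sm AA (q A0)) (vadd (sm r2 Da) (sm (-1) Db))"
  by (simp add: sg_def Da_def Db_def AA_def mu_def algebra_simps)
lemma I3: "rho [A0,A1,A0] (q A7) = vadd (sm AA (q A0)) (vadd (sm (-r2) Db) (sm 1 Da))"
  by (simp add: sg_def Da_def Db_def AA_def mu_def algebra_simps)
lemma I4: "rho [A1,A0,A1] (q A1) = vadd (sm AA (q A0)) (vadd (sm (-r2) Da) (sm 1 Db))"
  by (simp add: sg_def Da_def Db_def AA_def mu_def algebra_simps)

lemma indep:
  assumes "B e (q A0) = 0" "B (al A0) e = 0" "B (al A1) e = 0"
  shows "e = (0,0,0)"
proof -
  obtain e1 e2 e3 where e: "e = (e1,e2,e3)" by (cases e) auto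
  have E0: "(1+r2)*e1 + mu*(1+r2)*e3 = 0" using assms(2) by (simp add: e algebra_simps)
  have E1: "(1+r2/2)*e1 + (1+r2/2)*e2 + mu*(1+r2)*e3 = 0" using assms(3) by (simp add: e algebra_simps)
  have E2: "(2-2*r2)*e1 + (4*r2-6)*e2 - mu*e3 = 0" using assms(1) by (simp add: e algebra_simps)
  have "(2+r2)*(6*r2-8)*((1+r2)*e1 + mu*(1+r2)*e3) - 2*(1+r2)*(4*r2-6)*((1+r2/2)*e1 + (1+r2/2)*e2 + mu*(1+r2)*e3)
     + (2+r2)*(1+r2)*((2-2*r2)*e1 + (4*r2-6)*e2 - mu*e3) = e3 * (mu*(7*r2-10)*(1+r2))"
    by (simp add: algebra_simps mu_def)
  then have "e3 * (mu*(7*r2-10)*(1+r2)) = 0" using E0 E1 E2 by simp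
  moreover have "mu*(7*r2-10)*(1+r2) \<noteq> 0" using r2_bounds by (simp add: mu_def)
  ultimately have e3: "e3 = 0" by simp
  have "(1+r2)*e1 = 0" using E0 e3 by simp
  then have e1: "e1 = 0" using r2_bounds by simp
  have "(1+r2/2)*e2 = 0" using E1 e1 e3 by simp
  then have "e2 = 0" using r2_bounds by simp
  then show ?thesis using e e1 e3 by simp
qed

lemma vsub_zero: "vadd p (sm (-1) c) = (0,0,0) \<Longrightarrow> p = c"
  by (cases p; cases c) simp

lemma decomp:
  "p = vadd (sm (B p (q A0) / (82 - 58*r2)) (q A0))
         (vadd (sm (B (al A1) p / (4-2*r2)) Da) (sm (B (al A0) p / (4-2*r2)) Db))"
  (is "p = ?c")
proof -
  have n1: "82 - 58*r2 \<noteq> 0" "4 - 2*r2 \<noteq> 0" using r2_bounds by auto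
  have "vadd p (sm (-1) ?c) = (0,0,0)"
  proof (rule indep)
    show "B (vadd p (sm (-1) ?c)) (q A0) = 0"
      using n1 by (simp add: B_lin cB B_sym[of Da "q A0"] B_sym[of Db "q A0"] B_sym[of p "q A0"] del: q.simps al.simps)
    show "B (al A0) (vadd p (sm (-1) ?c)) = 0"
      using n1 by (simp add: B_lin cB del: q.simps al.simps)
    show "B (al A1) (vadd p (sm (-1) ?c)) = 0"
      using n1 by (simp add: B_lin cB del: q.simps al.simps)
  qed
  then show ?thesis by (rule vsub_zero)
qed

lemma half:
  fixes a x y g0 Ga Gb N d e :: real
  assumes x: "0 < x" and y: "0 < y" and a: "0 < a" and N: "0 < N" and d: "0 < d" and de: "d \<le> 2*e"
    and tl: "d*(x^2+y^2) + 2*e*x*y < a^2 * N" and neg: "a*g0 + x*Ga + y*Gb < 0" and g: "0 < g0"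
  shows "min Ga Gb < 0 \<and> d * g0^2 < 2 * N * (min Ga Gb)^2"
proof -
  define m where "m = min Ga Gb"
  have "x*m \<le> x*Ga" using x by (simp add: m_def mult_left_mono)
  moreover have "y*m \<le> y*Gb" using y by (simp add: m_def mult_left_mono)
  ultimately have h1: "(x+y)*m \<le> x*Ga + y*Gb" by (simp add: algebra_simps)
  have h3: "0 < a*g0" using a g by simp
  have h2: "a*g0 < -((x+y)*m)" using h1 neg by linarith
  have mneg: "m < 0"
  proof (rule ccontr)
    assume "\<not> m < 0"
    then have "0 \<le> (x+y)*m" using x y by simp
    then show False using h2 h3 by linarith
  qed
  have h4: "(a*g0)^2 < ((x+y)*m)^2"
  proof -
    have "(a*g0)^2 < (-((x+y)*m))^2" using h2 h3 by (intro power_strict_mono) auto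
    then show ?thesis by simp
  qed
  have h5: "d*(x+y)^2 \<le> 2 * (d*(x^2+y^2) + 2*e*x*y)"
  proof -
    have "0 \<le> d*(x-y)^2" using d by simp
    moreover have "0 \<le> 4*e*x*y" using de d x y by simp
    moreover have "2 * (d*(x^2+y^2) + 2*e*x*y) - d*(x+y)^2 = d*(x-y)^2 + 4*e*x*y"
      by (simp add: algebra_simps power2_eq_square)
    ultimately show ?thesis by linarith
  qed
  have g2: "0 < g0^2" using g by simp
  have h6: "g0^2 * (d*(x+y)^2) \<le> g0^2 * (2 * (d*(x^2+y^2) + 2*e*x*y))"
    using h5 g2 by (simp add: mult_left_mono)
  have h7: "g0^2 * (d*(x^2+y^2) + 2*e*x*y) < g0^2 * (a^2 * N)"
    using tl g2 by simp
  have h8: "g0^2 * (a^2 * N) = N * (a*g0)^2" by (simp add: algebra_simps power_mult_distrib)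
  have h9: "N * (a*g0)^2 < N * ((x+y)*m)^2" using h4 N by simp
  have "(x+y)^2 * (d * g0^2) = g0^2 * (d*(x+y)^2)" by (simp add: algebra_simps)
  also have "\<dots> \<le> g0^2 * (2 * (d*(x^2+y^2) + 2*e*x*y))" by (rule h6)
  also have "\<dots> = 2 * (g0^2 * (d*(x^2+y^2) + 2*e*x*y))" by simp
  also have "\<dots> < 2 * (g0^2 * (a^2 * N))" using h7 by simp
  also have "\<dots> = 2 * (N * (a*g0)^2)" using h8 by simp
  also have "\<dots> < 2 * (N * ((x+y)*m)^2)" using h9 by simp
  also have "\<dots> = (x+y)^2 * (2 * N * m^2)" by (simp only: power_mult_distrib) (simp add: ac_simps)
  finally have "(x+y)^2 * (d * g0^2) < (x+y)^2 * (2 * N * m^2)" .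
  then have "d * g0^2 < 2 * N * m^2" using x y by (simp add: mult_less_cancel_left_pos)
  then show ?thesis using mneg m_def by simp
qed

lemma final_arith:
  fixes g0 N d S A Ga Gb :: real
  assumes g: "0 < g0" and N: "0 < N" and d: "0 < d" and S: "0 < S" and K: "4 * N * A^2 \<le> S^2 * d"
    and ab: "Ga < 0" "0 < Gb" and sa: "d * g0^2 < 2 * N * Ga^2" and sb: "d * g0^2 < 2 * N * Gb^2"
    and M: "S * (Gb - Ga) \<le> 2 * A * g0"
  shows False
proof -
  have "Ga^2 + Gb^2 \<le> (Gb - Ga)^2"
  proof -
    have "0 \<le> - (Ga * Gb)" using ab by (simp add: mult_neg_pos less_eq_real_def)
    then show ?thesis by (simp add: power2_eq_square algebra_simps)
  qed
  then have "2 * N * (Ga^2 + Gb^2) \<le> 2 * N * (Gb - Ga)^2" using N by simp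
  then have h1: "2 * d * g0^2 < 2 * N * (Gb - Ga)^2"
    using sa sb by (simp add: algebra_simps)
  have h2: "(S * (Gb - Ga))^2 \<le> (2 * A * g0)^2"
    using M ab S by (intro power_mono) auto
  have "S^2 * (2 * d * g0^2) < S^2 * (2 * N * (Gb - Ga)^2)" using h1 S by simp
  also have "\<dots> = 2 * N * (S * (Gb - Ga))^2" by (simp add: power_mult_distrib)
  also have "\<dots> \<le> 2 * N * (2 * A * g0)^2" using h2 N by simp
  also have "\<dots> = (4 * N * A^2) * (2 * g0^2)" by (simp add: power_mult_distrib)
  also have "\<dots> \<le> (S^2 * d) * (2 * g0^2)" by (rule mult_right_mono[OF K]) simp
  finally show False by (simp add: algebra_simps)
qed


definition fut :: "vec \<Rightarrow> bool" where
  "fut p \<longleftrightarrow> B p p < 0 \<and> 0 < snd (snd p)"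

lemma mu_pos: "0 < mu" using r2_bounds by (simp add: mu_def)

lemma fut_B: assumes "fut p" "fut v" shows "B p v < 0"
proof -
  obtain x1 x2 x3 where p: "p = (x1,x2,x3)" by (cases p) auto
  obtain y1 y2 y3 where v: "v = (y1,y2,y3)" by (cases v) auto
  have "x1*x1 + x2*x2 - mu*x3*x3 < 0" "0 < x3" using assms(1) unfolding fut_def p by simp_all
  then have hx: "x1^2 + x2^2 < mu * x3^2" "0 < x3" by (simp_all add: power2_eq_square mult.assoc)
  have "y1*y1 + y2*y2 - mu*y3*y3 < 0" "0 < y3" using assms(2) unfolding fut_def v by simp_all
  then have hy: "y1^2 + y2^2 < mu * y3^2" "0 < y3" by (simp_all add: power2_eq_square mult.assoc)
  have cs: "(x1*y1 + x2*y2)^2 \<le> (x1^2 + x2^2) * (y1^2 + y2^2)"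
  proof -
    have "0 \<le> (x1*y2 - x2*y1)^2" by simp
    then show ?thesis by (simp add: power2_eq_square algebra_simps)
  qed
  have "(x1^2 + x2^2) * (y1^2 + y2^2) \<le> (mu * x3^2) * (y1^2 + y2^2)"
    using hx by (intro mult_right_mono) auto
  also have "\<dots> < (mu * x3^2) * (mu * y3^2)"
    using hy hx mu_pos by (intro mult_strict_left_mono) auto
  finally have h: "(x1^2 + x2^2) * (y1^2 + y2^2) < (mu * x3^2) * (mu * y3^2)" .
  have "(mu * x3^2) * (mu * y3^2) = (mu * x3 * y3)^2" by (simp add: power2_eq_square)
  then have "(x1*y1 + x2*y2)^2 < (mu * x3 * y3)^2" using cs h by linarith
  then have "x1*y1 + x2*y2 < mu * x3 * y3"
  proof (rule power_less_imp_less_base[of _ 2])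
    show "0 \<le> mu * x3 * y3" using mu_pos hx(2) hy(2) by simp
  qed
  then show ?thesis by (simp add: p v)
qed

lemma B_sg_self: "B (sg a p) p = B p p - 2 * (B (al a) p)^2"
  unfolding sg_def by (simp add: B_lin power2_eq_square B_sym[of p "al a"])

lemma fut_sg: assumes "fut p" shows "fut (sg a p)"
proof -
  have bb: "B (sg a p) (sg a p) < 0" using assms B_sg unfolding fut_def by simp
  obtain z1 z2 z3 where z: "sg a p = (z1,z2,z3)" by (cases "sg a p") auto
  have "0 < z3"
  proof (rule ccontr)
    assume n: "\<not> 0 < z3"
    show False
    proof (cases "z3 = 0")
      case True
      then have "0 \<le> B (sg a p) (sg a p)" by (simp add: z)
      then show False using bb by simp
    next
      case False
      then have "z3 < 0" using n by simp
      then have f: "fut (sm (-1) (sg a p))" using bb unfolding fut_def by (simp add: z)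
      have "B (sm (-1) (sg a p)) p < 0" by (rule fut_B[OF f assms])
      then have "0 < B (sg a p) p" by (simp add: B_sm1)
      moreover have "B (sg a p) p < 0" using B_sg_self[of a p] assms unfolding fut_def
        by (smt (verit) zero_le_power2)
      ultimately show False by simp
    qed
  qed
  then show ?thesis using bb z unfolding fut_def by simp
qed

lemma fut_rho: "fut p \<Longrightarrow> fut (rho w p)"
  by (induction w) (auto simp: fut_sg)

lemma fut_c: "fut (0,0,1)" using mu_pos unfolding fut_def by simp
lemma fut_q0: "fut (q A0)" using r2_bounds unfolding fut_def by (simp add: mu_def algebra_simps)

lemma Bg_lin3:
  "B g (vadd (sm a (q A0)) (vadd (sm x Da) (sm y Db))) = a * B g (q A0) + x * B g Da + y * B g Db"
  by (simp add: B_lin del: q.simps al.simps)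

lemma Bpp_lin3:
  "B (vadd (sm a (q A0)) (vadd (sm x Da) (sm y Db))) (vadd (sm a (q A0)) (vadd (sm x Da) (sm y Db)))
    = a^2 * (82 - 58*r2) + (48 - 32*r2) * (x^2 + y^2) + 2 * (24*r2 - 32) * x * y"
  by (simp add: B_lin cB B_sym[of Da "q A0"] B_sym[of Db "q A0"] B_sym[of Db Da] power2_eq_square algebra_simps
        del: q.simps al.simps)

lemma point_data:
  assumes "fut p"
  shows "\<exists>a x y. 0 < a \<and> B g p = a * B g (q A0) + x * B g Da + y * B g Db
    \<and> (48-32*r2) * (x^2+y^2) + 2*(24*r2-32) * x * y < a^2 * (58*r2-82)
    \<and> x * (4-2*r2) = B (al A1) p \<and> y * (4-2*r2) = B (al A0) p"
proof -
  define a where "a = B p (q A0) / (82 - 58*r2)"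
  define x where "x = B (al A1) p / (4-2*r2)"
  define y where "y = B (al A0) p / (4-2*r2)"
  have n: "82 - 58*r2 < 0" "0 < 4-2*r2" using r2_bounds by auto
  have pd: "p = vadd (sm a (q A0)) (vadd (sm x Da) (sm y Db))"
    using decomp[of p] unfolding a_def x_def y_def .
  have "B p (q A0) < 0" by (rule fut_B[OF assms fut_q0])
  then have a: "0 < a" unfolding a_def using n by (simp add: divide_neg_neg)
  have "B p p < 0" using assms unfolding fut_def by simp
  then have "a^2 * (82 - 58*r2) + (48 - 32*r2) * (x^2 + y^2) + 2 * (24*r2 - 32) * x * y < 0"
    using Bpp_lin3[of a x y] pd by simp
  then have tl: "(48-32*r2) * (x^2+y^2) + 2*(24*r2-32) * x * y < a^2 * (58*r2-82)"
    by (simp add: algebra_simps)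
  have bg: "B g p = a * B g (q A0) + x * B g Da + y * B g Db"
    using Bg_lin3[of g a x y] pd by simp
  have "x * (4-2*r2) = B (al A1) p" "y * (4-2*r2) = B (al A0) p" using n unfolding x_def y_def by simp_all
  then show ?thesis using a tl bg by blast
qed

lemma geo_final:
  assumes g0: "0 < B g (q A0)"
    and m1: "0 \<le> B g (sg A1 (q A7))" and m2: "0 \<le> B g (sg A0 (q A1))"
    and m3: "0 \<le> B g (rho [A0,A1,A0] (q A7))" and m4: "0 \<le> B g (rho [A1,A0,A1] (q A1))"
    and p1: "B g p1 < 0" "0 < B (al A0) p1" "0 < B (al A1) p1" "fut p1"
    and p2: "B g p2 < 0" "B (al A0) p2 < 0" "B (al A1) p2 < 0" "fut p2"
  shows False
proof -
  define G0 where "G0 = B g (q A0)"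
  define Ga where "Ga = B g Da"
  define Gb where "Gb = B g Db"
  have M1: "0 \<le> AA*G0 + r2*Gb - Ga" using m1 unfolding I1 G0_def Ga_def Gb_def
    by (simp add: B_lin del: q.simps al.simps)
  have M2: "0 \<le> AA*G0 + r2*Ga - Gb" using m2 unfolding I2 G0_def Ga_def Gb_def
    by (simp add: B_lin del: q.simps al.simps)
  have M3: "0 \<le> AA*G0 - r2*Gb + Ga" using m3 unfolding I3 G0_def Ga_def Gb_def
    by (simp add: B_lin del: q.simps al.simps)
  have M4: "0 \<le> AA*G0 - r2*Ga + Gb" using m4 unfolding I4 G0_def Ga_def Gb_def
    by (simp add: B_lin del: q.simps al.simps)
  have n: "0 < 4-2*r2" "0 < 48-32*r2" "48-32*r2 \<le> 2*(24*r2-32)" "0 < 58*r2-82" using r2_bounds by auto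
  have G0: "0 < G0" using g0 G0_def by simp
  obtain a x y where A1: "0 < a" "B g p1 = a * G0 + x * Ga + y * Gb"
    "(48-32*r2) * (x^2+y^2) + 2*(24*r2-32) * x * y < a^2 * (58*r2-82)"
    "x * (4-2*r2) = B (al A1) p1" "y * (4-2*r2) = B (al A0) p1"
    using point_data[OF p1(4), of g] unfolding G0_def Ga_def Gb_def by blast
  have "0 < x * (4-2*r2)" "0 < y * (4-2*r2)" using A1(4,5) p1(2,3) by linarith+
  then have xy1: "0 < x" "0 < y" using n(1) by (auto simp: zero_less_mult_iff)
  have h1: "min Ga Gb < 0 \<and> (48-32*r2) * G0^2 < 2 * (58*r2-82) * (min Ga Gb)^2"
    by (rule half[OF xy1 A1(1) n(4) n(2) n(3) A1(3)]) (use A1(2) p1(1) G0 in auto)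
  obtain a' x' y' where A2: "0 < a'" "B g p2 = a' * G0 + x' * Ga + y' * Gb"
    "(48-32*r2) * (x'^2+y'^2) + 2*(24*r2-32) * x' * y' < a'^2 * (58*r2-82)"
    "x' * (4-2*r2) = B (al A1) p2" "y' * (4-2*r2) = B (al A0) p2"
    using point_data[OF p2(4), of g] unfolding G0_def Ga_def Gb_def by blast
  have "x' * (4-2*r2) < 0" "y' * (4-2*r2) < 0" using A2(4,5) p2(2,3) by linarith+
  then have xy2: "0 < -x'" "0 < -y'" using n(1) by (auto simp: mult_less_0_iff)
  have tl2: "(48-32*r2) * ((-x')^2+(-y')^2) + 2*(24*r2-32) * (-x') * (-y') < a'^2 * (58*r2-82)"
    using A2(3) by simp
  have h2: "min (-Ga) (-Gb) < 0 \<and> (48-32*r2) * G0^2 < 2 * (58*r2-82) * (min (-Ga) (-Gb))^2"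
    by (rule half[OF xy2 A2(1) n(4) n(2) n(3) tl2]) (use A2(2) p2(1) G0 in auto)
  have S: "0 < 1 + r2" using r2_bounds by simp
  have K: "4 * (58*r2-82) * AA^2 \<le> (1+r2)^2 * (48-32*r2)"
  proof -
    have "4 * (58*r2-82) * AA^2 = 104*r2 - 136" by (simp add: AA_def power2_eq_square algebra_simps)
    moreover have "(1+r2)^2 * (48-32*r2) = 16" by (simp add: power2_eq_square algebra_simps)
    ultimately show ?thesis using r2_bounds by simp
  qed
  show False
  proof (cases "Ga \<le> Gb")
    case True
    then have a1: "Ga < 0" "(48-32*r2) * G0^2 < 2 * (58*r2-82) * Ga^2" using h1 by (simp_all add: min_def)
    have e: "min (-Ga) (-Gb) = -Gb" using True by (simp add: min_def)
    have a2: "0 < Gb" "(48-32*r2) * G0^2 < 2 * (58*r2-82) * Gb^2" using h2 unfolding e by simp_all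
    have M: "(1+r2) * (Gb - Ga) \<le> 2 * AA * G0" using M2 M3 by (simp add: algebra_simps)
    show False by (rule final_arith[OF G0 n(4) n(2) S K a1(1) a2(1) a1(2) a2(2) M])
  next
    case False
    then have a1: "Gb < 0" "(48-32*r2) * G0^2 < 2 * (58*r2-82) * Gb^2" using h1 by (simp_all add: min_def)
    have e: "min (-Ga) (-Gb) = -Ga" using False by (simp add: min_def)
    have a2: "0 < Ga" "(48-32*r2) * G0^2 < 2 * (58*r2-82) * Ga^2" using h2 unfolding e by simp_all
    have M: "(1+r2) * (Ga - Gb) \<le> 2 * AA * G0" using M1 M4 by (simp add: algebra_simps)
    show False by (rule final_arith[OF G0 n(4) n(2) S K a1(1) a2(1) a1(2) a2(2) M])
  qed
qed



section \<open>The Coxeter lemma\<close>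

abbreviation w0 :: "L8 list" where "w0 \<equiv> [A0,A1,A0,A1]"

lemma adj01: "adj A0 A1" by (simp add: adj_def)

lemma weq_w0_rev: "weq w0 [A1,A0,A1,A0]"
proof -
  have "weq (w0 @ w0) []" using weq_oct[OF adj01] by (simp add: oct_def)
  then show ?thesis using weq_inv by fastforce
qed

lemma rho_w0_w0: "rho w0 (rho w0 v) = v"
  using rho_oct[OF adj01, of v] by (simp add: oct_def)

lemma sg_q0: "sg A0 (q A0) = q A0" "sg A1 (q A0) = q A0"
  by (simp_all add: sg_def cB del: q.simps al.simps) (simp_all add: sm_zero)

lemma rho_q0: "set u \<subseteq> {A0,A1} \<Longrightarrow> rho u (q A0) = q A0"
  by (induction u) (auto simp: sg_q0 simp del: q.simps)

lemma rho_w0_Da: "rho w0 Da = sm (-1) Da"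
  by (simp add: sg_def Da_def AA_def mu_def algebra_simps)
lemma rho_w0_Db: "rho w0 Db = sm (-1) Db"
  by (simp add: sg_def Db_def AA_def mu_def algebra_simps)

lemma vgen1: "vadd (sm 0 P) (vadd (sm x (sm (-1) U)) (sm y (sm (-1) V))) =
    sm (-1) (vadd (sm 0 P) (vadd (sm x U) (sm y V)))"
  by (cases P; cases U; cases V) simp

lemma rho_w0_perp: assumes "B x (q A0) = 0" shows "rho w0 x = sm (-1) x"
proof -
  define x1 where "x1 = B (al A1) x / (4-2*r2)"
  define y1 where "y1 = B (al A0) x / (4-2*r2)"
  have d: "x = vadd (sm 0 (q A0)) (vadd (sm x1 Da) (sm y1 Db))"
    using decomp[of x] assms unfolding x1_def y1_def by simp
  have "rho w0 x = vadd (sm 0 (rho w0 (q A0))) (vadd (sm x1 (rho w0 Da)) (sm y1 (rho w0 Db)))"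
    by (subst d) (simp only: rho_add rho_sm)
  also have "\<dots> = vadd (sm 0 (q A0)) (vadd (sm x1 (sm (-1) Da)) (sm y1 (sm (-1) Db)))"
  proof -
    have q0: "rho w0 (q A0) = q A0" by (rule rho_q0) simp
    show ?thesis by (simp only: rho_w0_Da rho_w0_Db q0)
  qed
  also have "\<dots> = sm (-1) (vadd (sm 0 (q A0)) (vadd (sm x1 Da) (sm y1 Db)))"
    by (rule vgen1)
  finally show ?thesis using d by simp
qed

lemma rho_revw0_al0: "rho [A1,A0,A1,A0] (al A0) = sm (-1) (al A0)"
proof -
  have "rho [A1,A0,A1,A0] = rho w0" using weq_rho[OF weq_w0_rev] by simp
  then show ?thesis using rho_w0_perp[of "al A0"] by (simp add: cB del: al.simps q.simps)
qed

lemma rho_revw0_al1: "rho [A1,A0,A1,A0] (al A1) = sm (-1) (al A1)"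
proof -
  have "rho [A1,A0,A1,A0] = rho w0" using weq_rho[OF weq_w0_rev] by simp
  then show ?thesis using rho_w0_perp[of "al A1"] by (simp add: cB del: al.simps q.simps)
qed

lemma star_pt:
  assumes u: "set u \<subseteq> {A0,A1}" and g0: "0 < B (rho W (al r)) (q A0)"
  shows "0 \<le> B (rho W (al r)) (rho u (q k))"
proof -
  define X where "X = rho (rev u) (rho W (al r))"
  have eX: "X = rho (rev u @ W) (al r)" unfolding X_def by (simp add: rho_app)
  have bX: "B (rho u X) (rho u Y) = B X Y" for Y by (rule rho_B)
  have ux: "rho u X = rho W (al r)" unfolding X_def by (rule rho_rev')
  have "B X (q A0) = B (rho W (al r)) (q A0)" using bX[of "q A0"] ux rho_q0[OF u] by simp
  then have bq: "0 < B X (q A0)" using g0 by simp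
  have "pos X"
  proof -
    have "pos X \<or> pos (sm (-1) X)" using root_pm[of "rev u @ W" r] eX by simp
    moreover have "\<not> pos (sm (-1) X)"
    proof
      assume "pos (sm (-1) X)"
      then have "0 \<le> B (sm (-1) X) (q A0)" unfolding pos_def by blast
      then show False using bq by (simp add: B_sm1 del: q.simps)
    qed
    ultimately show ?thesis by blast
  qed
  then have "0 \<le> B X (q k)" unfolding pos_def by blast
  then show ?thesis using bX[of "q k"] ux by simp
qed

lemma lw_w0: "lw w0 \<le> 4" using glen_le[of wstep w0] by simp

lemma Y_desc:
  assumes h: "lw (Y @ w0) = lw Y + 4"
  shows "lw Y < lw (Y@[A0])" "lw Y < lw (Y@[A1])"
proof -
  have l3: "lw [A1,A0,A1] \<le> 3" "lw [A0,A1,A0] \<le> 3"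
    using glen_le[of wstep "[A1,A0,A1]"] glen_le[of wstep "[A0,A1,A0]"] by simp_all
  show "lw Y < lw (Y@[A0])"
  proof (rule ccontr)
    assume "\<not> lw Y < lw (Y@[A0])"
    then have d: "lw Y = lw (Y@[A0]) + 1" using lw_snoc[of Y A0] by auto
    have "lw (Y @ w0) = lw ((Y@[A0]) @ [A1,A0,A1])" by simp
    also have "\<dots> \<le> lw (Y@[A0]) + 3" using lw_app[of "Y@[A0]" "[A1,A0,A1]"] l3 by simp
    finally show False using h d by simp
  qed
  show "lw Y < lw (Y@[A1])"
  proof (rule ccontr)
    assume "\<not> lw Y < lw (Y@[A1])"
    then have d: "lw Y = lw (Y@[A1]) + 1" using lw_snoc[of Y A1] by auto
    have "weq (Y @ w0) (Y @ [A1,A0,A1,A0])" using weq_app[OF cl_refl weq_w0_rev] by simp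
    then have "lw (Y @ w0) = lw ((Y@[A1]) @ [A0,A1,A0])" using glen_cong by fastforce
    also have "\<dots> \<le> lw (Y@[A1]) + 3" using lw_app[of "Y@[A1]" "[A0,A1,A0]"] l3 by simp
    finally show False using h d by simp
  qed
qed

lemma Z_desc:
  assumes h: "lw (w0 @ Z) = 4 + length Z"
  shows "lw Z < lw (A0#Z)" "lw Z < lw (A1#Z)"
proof -
  have l3: "lw [A1,A0,A1] \<le> 3" "lw [A0,A1,A0] \<le> 3"
    using glen_le[of wstep "[A1,A0,A1]"] glen_le[of wstep "[A0,A1,A0]"] by simp_all
  have lz: "lw Z \<le> length Z" by (rule glen_le)
  show "lw Z < lw (A0#Z)"
  proof (rule ccontr)
    assume "\<not> lw Z < lw (A0#Z)"
    then have d: "lw Z = lw (A0#Z) + 1" using lw_cons[of A0 Z] by auto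
    have "weq (w0 @ Z) ([A1,A0,A1,A0] @ Z)" using weq_app[OF weq_w0_rev cl_refl] by simp
    then have "lw (w0 @ Z) = lw ([A1,A0,A1] @ (A0#Z))" using glen_cong by fastforce
    also have "\<dots> \<le> 3 + lw (A0#Z)" using lw_app[of "[A1,A0,A1]" "A0#Z"] l3 by simp
    finally show False using h d lz by simp
  qed
  show "lw Z < lw (A1#Z)"
  proof (rule ccontr)
    assume "\<not> lw Z < lw (A1#Z)"
    then have d: "lw Z = lw (A1#Z) + 1" using lw_cons[of A1 Z] by auto
    have "lw (w0 @ Z) = lw ([A0,A1,A0] @ (A1#Z))" by simp
    also have "\<dots> \<le> 3 + lw (A1#Z)" using lw_app[of "[A0,A1,A0]" "A1#Z"] l3 by simp
    finally show False using h d lz by simp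
  qed
qed

lemma wlemma:
  assumes h1: "lw (Y @ w0) = lw Y + 4" and h2: "lw (w0 @ Z) = 4 + length Z"
  shows "lw (Y @ w0 @ Z) = lw Y + 4 + length Z"
  using h2
proof (induction Z rule: rev_induct)
  case Nil
  then show ?case using h1 by simp
next
  case (snoc r Z')
  have hz: "lw (w0 @ Z' @ [r]) = 5 + length Z'" using snoc.prems by simp
  have a1: "lw (w0 @ Z') \<le> 4 + length Z'" using glen_le[of wstep "w0 @ Z'"] by simp
  have a2: "lw (w0 @ Z' @ [r]) \<le> lw (w0 @ Z') + 1" using lw_snoc[of "w0 @ Z'" r] by auto
  have hz': "lw (w0 @ Z') = 4 + length Z'" using a1 a2 hz by simp
  have ih: "lw (Y @ w0 @ Z') = lw Y + 4 + length Z'" using snoc.IH hz' by simp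
  show ?case
  proof (rule ccontr)
    assume nc: "\<not> ?case"
    have "lw (Y @ w0 @ Z') = lw ((Y @ w0 @ Z') @ [r]) + 1"
      using lw_snoc[of "Y @ w0 @ Z'" r] ih nc by auto
    then have negY: "pos (sm (-1) (rho (Y @ w0 @ Z') (al r)))" using neg_thm by simp
    define \<beta> where "\<beta> = rho Z' (al r)"
    define \<gamma> where "\<gamma> = rho (w0 @ Z') (al r)"
    have gb: "\<gamma> = rho w0 \<beta>" unfolding \<gamma>_def \<beta>_def by (simp add: rho_app)
    have pg: "pos \<gamma>" unfolding \<gamma>_def using pos_thm[of "w0@Z'" r] hz hz' by simp
    have lZ: "lw Z' \<le> length Z'" by (rule glen_le)
    have "lw (w0 @ Z' @ [r]) \<le> lw w0 + lw (Z' @ [r])" using lw_app by blast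
    then have "length Z' < lw (Z' @ [r])" using hz lw_w0 by simp
    then have pb: "pos \<beta>" unfolding \<beta>_def using pos_thm[of Z' r] lZ by simp
    have g0: "0 < B \<gamma> (q A0)"
    proof -
      have "0 \<le> B \<gamma> (q A0)" using pg unfolding pos_def by blast
      moreover have "B \<gamma> (q A0) \<noteq> 0"
      proof
        assume "B \<gamma> (q A0) = 0"
        then have "rho w0 \<gamma> = sm (-1) \<gamma>" by (rule rho_w0_perp)
        moreover have "rho w0 \<gamma> = \<beta>" using gb rho_w0_w0 by simp
        ultimately have "\<beta> = sm (-1) \<gamma>" by simp
        then show False using pb pg pos_neg by simp
      qed
      ultimately show ?thesis by simp
    qed
    have groot: "\<gamma> = rho (w0 @ Z') (al r)" by (simp add: \<gamma>_def)
    have star: "0 \<le> B \<gamma> (rho u (q k))" if "set u \<subseteq> {A0,A1}" for u k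
      using star_pt[OF that, of "w0 @ Z'" r k] g0 groot by simp
    have m1: "0 \<le> B \<gamma> (sg A1 (q A7))" using star[of "[A1]" A7] by simp
    have m2: "0 \<le> B \<gamma> (sg A0 (q A1))" using star[of "[A0]" A1] by simp
    have m3: "0 \<le> B \<gamma> (rho [A0,A1,A0] (q A7))" using star[of "[A0,A1,A0]" A7] by simp
    have m4: "0 \<le> B \<gamma> (rho [A1,A0,A1] (q A1))" using star[of "[A1,A0,A1]" A1] by simp
    define c :: vec where "c = (0,0,1)"
    define p1 where "p1 = rho (rev Y) c"
    have p1c: "rho Y p1 = c" unfolding p1_def by (rule rho_rev')
    have bY: "B (rho Y X) (rho Y p1) = B X p1" for X by (rule rho_B)
    have "B \<gamma> p1 = B (rho Y \<gamma>) c" using bY[of \<gamma>] p1c by simp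
    moreover have "rho Y \<gamma> = rho (Y @ w0 @ Z') (al r)" unfolding \<gamma>_def by (simp add: rho_app)
    ultimately have "B \<gamma> p1 = - B (sm (-1) (rho (Y @ w0 @ Z') (al r))) c" by (simp add: B_sm1)
    then have p1a: "B \<gamma> p1 < 0" using pos_center[OF negY] c_def by simp
    have yd: "lw Y < lw (Y@[A0])" "lw Y < lw (Y@[A1])" using Y_desc[OF h1] by simp_all
    have "B (al A0) p1 = B (rho Y (al A0)) c" using bY[of "al A0"] p1c by simp
    then have p1b: "0 < B (al A0) p1" using pos_center[OF pos_thm[OF yd(1)]] c_def by simp
    have "B (al A1) p1 = B (rho Y (al A1)) c" using bY[of "al A1"] p1c by simp
    then have p1d: "0 < B (al A1) p1" using pos_center[OF pos_thm[OF yd(2)]] c_def by simp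
    have p1f: "fut p1" unfolding p1_def c_def by (rule fut_rho[OF fut_c])
    define Z where "Z = Z' @ [r]"
    define p2 where "p2 = rho (w0 @ Z) c"
    have hZ: "lw (w0 @ Z) = 4 + length Z" using snoc.prems Z_def by simp
    define W2 where "W2 = rev (w0 @ Z)"
    have p2c: "rho W2 p2 = c" unfolding p2_def W2_def by (rule rho_rev)
    have "rho W2 \<gamma> = rho (rev Z) (rho [A1,A0,A1,A0] (rho w0 \<beta>))"
      unfolding W2_def gb by (simp add: rho_app)
    also have "\<dots> = rho (rev Z) \<beta>" using rho_rev[of w0 \<beta>] by simp
    also have "\<dots> = sg r (rho (rev Z') (rho Z' (al r)))" unfolding Z_def \<beta>_def by simp
    also have "\<dots> = sm (-1) (al r)" by (simp add: rho_rev sg_al_self)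
    finally have "rho W2 \<gamma> = sm (-1) (al r)" .
    then have "B \<gamma> p2 = - B (al r) c" using rho_B[of W2 \<gamma> p2] p2c by (simp add: B_sm1)
    then have p2a: "B \<gamma> p2 < 0" using pos_center[OF pos_al[of r]] c_def by simp
    have zd: "lw Z < lw (A0#Z)" "lw Z < lw (A1#Z)" using Z_desc[OF hZ] by simp_all
    have zr: "lw (rev Z) < lw (rev Z @ [A0])" "lw (rev Z) < lw (rev Z @ [A1])"
      using zd lw_rev[of Z] lw_rev[of "A0#Z"] lw_rev[of "A1#Z"] by simp_all
    have pZ: "rho [A1,A0,A1,A0] p2 = rho Z c"
      unfolding p2_def using rho_rev[of w0 "rho Z c"] by (simp add: rho_app)
    have bZ: "B (al a) (rho Z c) = B (rho (rev Z) (al a)) c" for a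
      using rho_B[of "rev Z" "al a" "rho Z c"] rho_rev[of Z c] by simp
    have "B (al A0) p2 = B (rho [A1,A0,A1,A0] (al A0)) (rho [A1,A0,A1,A0] p2)" by (simp only: rho_B)
    also have "\<dots> = - B (rho (rev Z) (al A0)) c" unfolding pZ rho_revw0_al0 by (simp add: B_sm1 bZ del: al.simps)
    finally have p2b: "B (al A0) p2 < 0" using pos_center[OF pos_thm[OF zr(1)]] c_def by simp
    have "B (al A1) p2 = B (rho [A1,A0,A1,A0] (al A1)) (rho [A1,A0,A1,A0] p2)" by (simp only: rho_B)
    also have "\<dots> = - B (rho (rev Z) (al A1)) c" unfolding pZ rho_revw0_al1 by (simp add: B_sm1 bZ del: al.simps)
    finally have p2d: "B (al A1) p2 < 0" using pos_center[OF pos_thm[OF zr(2)]] c_def by simp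
    have p2f: "fut p2" unfolding p2_def c_def by (rule fut_rho[OF fut_c])
    show False by (rule geo_final[OF g0 m1 m2 m3 m4 p1a p1b p1d p1f p2a p2b p2d p2f])
  qed
qed



type_synonym fr = "bool \<times> L8"

fun fapp :: "fr \<Rightarrow> L8 \<Rightarrow> L8" where
  "fapp (b,c) a = lt (if b then ix c + ix a else ix c - ix a)"

fun fcomp :: "fr \<Rightarrow> fr \<Rightarrow> fr" where
  "fcomp (b,c) (b',c') = (b = b', lt (if b then ix c + ix c' else ix c - ix c'))"

fun finv :: "fr \<Rightarrow> fr" where
  "finv (b,c) = (b, if b then lt (- ix c) else c)"

definition fe :: fr where "fe = (True, A0)"

lemma lt_cong: "x mod 8 = y mod 8 \<Longrightarrow> lt x = lt y"
  unfolding lt_def by simp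

lemma fapp_comp: "fapp (fcomp f g) a = fapp f (fapp g a)"
  by (cases f; cases g) (auto intro!: lt_cong simp: mod_simps algebra_simps)

lemma fapp_inv1: "fapp (finv f) (fapp f a) = a"
proof -
  have "lt (ix a) = a" by simp
  then show ?thesis by (cases f) (auto intro!: trans[OF lt_cong lt_ix] simp: mod_simps)
qed

lemma fapp_inv2: "fapp f (fapp (finv f) a) = a"
  by (cases f) (auto intro!: trans[OF lt_cong lt_ix] simp: mod_simps)

lemma fapp_fe[simp]: "fapp fe a = a"
  unfolding fe_def by simp

lemma fr_ext: assumes "\<And>a. fapp f a = fapp g a" shows "f = g"
proof -
  obtain b c where f: "f = (b,c)" by (cases f)
  obtain b' c' where g: "g = (b',c')" by (cases g)
  have a0: "fapp (x,y) A0 = y" for x y by (cases x) simp_all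
  have "c = c'" using assms[of A0] f g a0 by metis
  moreover have "b = b'"
  proof (rule ccontr)
    assume "b \<noteq> b'"
    then have "lt (ix c + 1) = lt (ix c - 1)" using assms[of A1] f g \<open>c = c'\<close> by (cases b) auto
    then have "(ix c + 1) mod 8 = (ix c - 1) mod 8" by (metis ix_lt)
    then show False by presburger
  qed
  ultimately show ?thesis using f g by simp
qed

lemma fcomp_assoc: "fcomp (fcomp f g) h = fcomp f (fcomp g h)"
  by (rule fr_ext) (simp add: fapp_comp)

lemma fcomp_fe[simp]: "fcomp fe f = f" "fcomp f fe = f"
  by (rule fr_ext, simp add: fapp_comp)+

lemma fcomp_inv: "fcomp f (finv f) = fe" "fcomp (finv f) f = fe"
  by (rule fr_ext, simp add: fapp_comp fapp_inv1 fapp_inv2)+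

lemma adj_iff_ix: "adj a b \<longleftrightarrow> (ix b - ix a) mod 8 = 1 \<or> (ix b - ix a) mod 8 = 7"
  by (simp add: adj_def)

lemma fapp_adj: "adj (fapp f a) (fapp f b) = adj a b"
proof -
  obtain bb c where f: "f = (bb,c)" by (cases f)
  show ?thesis
  proof (cases bb)
    case True
    have "(ix (fapp f b) - ix (fapp f a)) mod 8 = (ix b - ix a) mod 8"
      using f True by (simp add: mod_simps)
    then show ?thesis unfolding adj_def by simp
  next
    case False
    have "(ix (fapp f b) - ix (fapp f a)) mod 8 = (ix a - ix b) mod 8"
      using f False by (simp add: mod_simps)
    moreover have "((ix a - ix b) mod 8 = 1 \<or> (ix a - ix b) mod 8 = 7) \<longleftrightarrow>
        ((ix b - ix a) mod 8 = 1 \<or> (ix b - ix a) mod 8 = 7)" by presburger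
    ultimately show ?thesis unfolding adj_def by simp
  qed
qed

section \<open>Shadows and lifts\<close>

fun side :: "letter \<Rightarrow> L8" where
  "side (Ga,True) = A0" | "side (Ga,False) = A2" | "side (Gb,True) = A3" | "side (Gb,False) = A1"
| "side (Gc,True) = A4" | "side (Gc,False) = A6" | "side (Gd,True) = A7" | "side (Gd,False) = A5"

fun sideinv :: "L8 \<Rightarrow> letter" where
  "sideinv A0 = (Ga,True)" | "sideinv A2 = (Ga,False)" | "sideinv A3 = (Gb,True)" | "sideinv A1 = (Gb,False)"
| "sideinv A4 = (Gc,True)" | "sideinv A6 = (Gc,False)" | "sideinv A7 = (Gd,True)" | "sideinv A5 = (Gd,False)"

lemma side_inv1[simp]: "sideinv (side x) = x"
  by (cases x; cases "fst x"; cases "snd x") auto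
lemma side_inv2[simp]: "side (sideinv a) = a"
  by (cases a) auto

fun tau :: "letter \<Rightarrow> fr" where
  "tau (Ga,_) = (False, A2)" | "tau (Gc,_) = (False, A2)"
| "tau (Gb,_) = (False, A4)" | "tau (Gd,_) = (False, A4)"

primrec shadow :: "fr \<Rightarrow> word \<Rightarrow> L8 list" where
  "shadow f [] = []"
| "shadow f (x#w) = fapp f (side x) # shadow (fcomp f (tau x)) w"

primrec fend :: "fr \<Rightarrow> word \<Rightarrow> fr" where
  "fend f [] = f"
| "fend f (x#w) = fend (fcomp f (tau x)) w"

definition pick :: "fr \<Rightarrow> L8 \<Rightarrow> letter" where
  "pick f s = sideinv (fapp (finv f) s)"

primrec lift :: "fr \<Rightarrow> L8 list \<Rightarrow> word" where
  "lift f [] = []"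
| "lift f (s#r) = pick f s # lift (fcomp f (tau (pick f s))) r"

lemma pick_side: "fapp f (side (pick f s)) = s"
  unfolding pick_def by (simp add: fapp_inv2)

lemma pick_eq: "fapp f (side x) = s \<Longrightarrow> pick f s = x"
  unfolding pick_def using fapp_inv1 by (metis side_inv1)

lemma shadow_lift: "shadow f (lift f r) = r"
  by (induction r arbitrary: f) (auto simp: pick_side)

lemma lift_shadow: "lift f (shadow f w) = w"
  by (induction w arbitrary: f) (auto simp: pick_eq)

lemma length_shadow[simp]: "length (shadow f w) = length w"
  by (induction w arbitrary: f) auto
lemma length_lift[simp]: "length (lift f r) = length r"
  by (induction r arbitrary: f) auto

lemma shadow_app: "shadow f (u@v) = shadow f u @ shadow (fend f u) v"
  by (induction u arbitrary: f) auto
lemma fend_app: "fend f (u@v) = fend (fend f u) v"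
  by (induction u arbitrary: f) auto

lemma fend_eqv: "fend (fcomp g f) w = fcomp g (fend f w)"
  by (induction w arbitrary: f) (auto simp: fcomp_assoc)

lemma shadow_eqv: "shadow (fcomp g f) w = map (fapp g) (shadow f w)"
  by (induction w arbitrary: f) (auto simp: fcomp_assoc fapp_comp)

lemma lift_app: "lift f (r@r') = lift f r @ lift (fend f (lift f r)) r'"
  by (induction r arbitrary: f) auto

lemma tau_inv: "fcomp (tau x) (tau (linv x)) = fe"
  by (cases x; cases "fst x") (auto simp: linv_def fe_def lt_def)

lemma tau_side: "fapp (tau x) (side (linv x)) = side x"
  by (cases x; cases "fst x"; cases "snd x") (auto simp: linv_def lt_def)

lemma shadow_free: "shadow f [x, linv x] = [fapp f (side x), fapp f (side x)]"
  by (simp add: fapp_comp tau_side)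

lemma fend_free: "fend f [x, linv x] = f"
  by (simp add: fcomp_assoc tau_inv)

lemma shadow_fe_rel: "shadow fe relator = oct A0 A7"
  by (simp add: relator_def oct_def fe_def lt_def)

lemma fend_fe_rel: "fend fe relator = fe"
  by (simp add: relator_def fe_def lt_def)

lemma map_oct: "map g (oct a b) = oct (g a) (g b)" by (simp add: oct_def)

lemma shadow_rel: "shadow f relator = oct (fapp f A0) (fapp f A7)"
  using shadow_eqv[of f fe relator] shadow_fe_rel by (simp add: map_oct)

lemma fend_rel: "fend f relator = f"
  using fend_eqv[of f fe relator] fend_fe_rel by simp

lemma adj07: "adj A0 A7" by (simp add: adj_def)

lemma rstep_shadow: "rstep a b \<Longrightarrow> weq (shadow f a) (shadow f b) \<and> fend f a = fend f b"
proof (induction rule: rstep.induct)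
  case (free u x v)
  define g where "g = fend f u"
  have e1: "shadow f (u @ [x, linv x] @ v) = shadow f u @ [fapp g (side x), fapp g (side x)] @ shadow g v"
    unfolding shadow_app[of f u] shadow_app[of _ "[x, linv x]"] g_def shadow_free fend_free by simp
  have e2: "shadow f (u @ v) = shadow f u @ [] @ shadow g v" unfolding shadow_app g_def by simp
  have e3: "fend f (u @ [x, linv x] @ v) = fend f (u @ v)"
    unfolding fend_app[of f u] fend_app[of _ "[x, linv x]"] fend_free by simp
  show ?case unfolding e1 e2 e3 using weq_ctx[OF weq_aa] by simp
next
  case (rel u v)
  define g where "g = fend f u"
  have "adj (fapp g A0) (fapp g A7)" using adj07 fapp_adj by simp
  then have w: "weq (shadow f u @ oct (fapp g A0) (fapp g A7) @ shadow g v) (shadow f u @ [] @ shadow g v)"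
    by (rule weq_ctx[OF weq_oct])
  have e1: "shadow f (u @ relator @ v) = shadow f u @ oct (fapp g A0) (fapp g A7) @ shadow g v"
    unfolding shadow_app[of f u] shadow_app[of _ relator] g_def shadow_rel fend_rel by simp
  have e2: "shadow f (u @ v) = shadow f u @ [] @ shadow g v" unfolding shadow_app g_def by simp
  have e3: "fend f (u @ relator @ v) = fend f (u @ v)"
    unfolding fend_app[of f u] fend_app[of _ relator] fend_rel by simp
  show ?case unfolding e1 e2 e3 using w by simp
qed

lemma geq_shadow: "geq a b \<Longrightarrow> weq (shadow f a) (shadow f b) \<and> fend f a = fend f b"
  unfolding geq_def
proof (induction rule: rtranclp_induct)
  case base then show ?case by simp
next
  case (step y z)
  have "weq (shadow f y) (shadow f z) \<and> fend f y = fend f z"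
  proof (cases "rstep y z")
    case True
    then show ?thesis using rstep_shadow by blast
  next
    case False
    then have "rstep z y" using step(2) by simp
    then have "weq (shadow f z) (shadow f y) \<and> fend f z = fend f y" by (rule rstep_shadow)
    then show ?thesis using cl_sym by metis
  qed
  then show ?case using step(3) cl_trans by metis
qed

lemma geq_cl: "geq = cl rstep" by (simp add: geq_def cl_def fun_eq_iff)

lemma rstep_ctx: "rstep a b \<Longrightarrow> rstep (u@a@v) (u@b@v)"
proof (induction rule: rstep.induct)
  case (free u' x v') show ?case using rstep.free[of "u@u'" x "v'@v"] by simp
next
  case (rel u' v') show ?case using rstep.rel[of "u@u'" "v'@v"] by simp
qed

lemma geq_ctx: "geq a b \<Longrightarrow> geq (u@a@v) (u@b@v)"
  unfolding geq_cl by (rule cl_ctx[of rstep, OF rstep_ctx])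
lemma geq_app: "geq a b \<Longrightarrow> geq c d \<Longrightarrow> geq (a@c) (b@d)"
  unfolding geq_cl by (rule cl_app[of rstep, OF rstep_ctx])
lemma geq_sym: "geq a b \<Longrightarrow> geq b a" unfolding geq_cl by (rule cl_sym)
lemma geq_trans: "geq a b \<Longrightarrow> geq b c \<Longrightarrow> geq a c" unfolding geq_cl by (rule cl_trans)
lemma geq_refl[simp]: "geq a a" unfolding geq_cl by simp

lemma geq_free: "geq (u @ [x, linv x] @ v) (u @ v)"
  unfolding geq_cl by (rule cl_step, rule rstep.free)

lemma linv_linv[simp]: "linv (linv x) = x" by (simp add: linv_def)

definition winv :: "word \<Rightarrow> word" where "winv w = rev (map linv w)"

lemma geq_cancel: "geq (w @ winv w) []"
proof (induction w)
  case Nil then show ?case by (simp add: winv_def)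
next
  case (Cons x w)
  have "geq ([x] @ (w @ winv w) @ [linv x]) ([x] @ [] @ [linv x])" by (rule geq_ctx[OF Cons])
  moreover have "geq ([] @ [x, linv x] @ []) ([] @ [])" by (rule geq_free)
  ultimately show ?case by (simp add: winv_def) (metis append_Cons append_Nil geq_trans)
qed

lemma geq_rot1: "geq (x#w) [] \<Longrightarrow> geq (w@[x]) []"
proof -
  assume h: "geq (x#w) []"
  have "geq ([linv x, x] @ (w@[x])) ([] @ (w@[x]))"
    using geq_free[of "[]" "linv x" "w@[x]"] by simp
  then have a: "geq (w@[x]) ([linv x] @ (x#w) @ [x])" by (simp add: geq_sym)
  have "geq ([linv x] @ (x#w) @ [x]) ([linv x] @ [] @ [x])" by (rule geq_ctx[OF h])
  moreover have "geq ([] @ [linv x, linv (linv x)] @ []) ([] @ [])" by (rule geq_free)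
  ultimately have "geq ([linv x] @ (x#w) @ [x]) []" using geq_trans by fastforce
  then show ?thesis using a geq_trans by blast
qed

lemma geq_rot: "geq r [] \<Longrightarrow> geq (rotate k r) []"
proof (induction k)
  case 0 then show ?case by simp
next
  case (Suc k)
  then have h: "geq (rotate k r) []" by simp
  show ?case
  proof (cases "rotate k r")
    case Nil then show ?thesis using h by (simp add: rotate_Suc)
  next
    case (Cons x w) then show ?thesis using h geq_rot1 by (simp add: rotate_Suc)
  qed
qed

lemma geq_relator: "geq relator []"
  unfolding geq_cl using cl_step[of rstep, OF rstep.rel[of "[]" "[]"]] by simp

lemma relinv_winv: "relator_inv = winv relator"
  by (simp add: relator_inv_def relator_def winv_def linv_def)

lemma geq_relinv: "geq relator_inv []"
proof -
  have "geq (winv relator @ relator) (winv relator @ [])" using geq_app[OF geq_refl geq_relator] .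
  moreover have "geq (winv relator @ winv (winv relator)) []" by (rule geq_cancel)
  moreover have "winv (winv relator) = relator" by (simp add: winv_def rev_map o_def)
  ultimately show ?thesis using relinv_winv geq_trans geq_sym by (metis append_Nil2)
qed

definition cyc :: "word list" where
  "cyc = [relator, rotate 1 relator, rotate 2 relator, rotate 3 relator, rotate 4 relator,
    rotate 5 relator, rotate 6 relator, rotate 7 relator,
    relator_inv, rotate 1 relator_inv, rotate 2 relator_inv, rotate 3 relator_inv, rotate 4 relator_inv,
    rotate 5 relator_inv, rotate 6 relator_inv, rotate 7 relator_inv]"

lemmas rot_simps = numeral_eq_Suc rotate_Suc

lemma cyc_geq: "c \<in> set cyc \<Longrightarrow> geq c []"
  unfolding cyc_def using geq_rot[OF geq_relator] geq_rot[OF geq_relinv] geq_relator geq_relinv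
  by (auto simp del: rotate_Suc)

lemma cyc_fend: "c \<in> set cyc \<Longrightarrow> fend fe c = fe"
  unfolding cyc_def by (auto simp: relator_def relator_inv_def fe_def lt_def rot_simps)

lemma lift_oct_fe: "adj a b \<Longrightarrow> lift fe (oct a b) \<in> set cyc"
  by (cases a; cases b) (simp_all add: adj_def oct_def cyc_def relator_def relator_inv_def fe_def lt_def
      rot_simps pick_def)

lemma pick_eqv: "pick (fcomp g h) (fapp g s) = pick h s"
  by (rule pick_eq) (simp add: fapp_comp pick_side)

lemma lift_eqv: "lift (fcomp g h) (map (fapp g) r) = lift h r"
  by (induction r arbitrary: h) (auto simp: pick_eqv fcomp_assoc)

lemma lift_oct: assumes "adj a b" shows "lift g (oct a b) \<in> set cyc"
proof -
  define a' where "a' = fapp (finv g) a"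
  define b' where "b' = fapp (finv g) b"
  have ab: "adj a' b'" unfolding a'_def b'_def using assms fapp_adj by simp
  have "oct a b = map (fapp g) (oct a' b')" unfolding a'_def b'_def by (simp add: map_oct fapp_inv2)
  then have "lift g (oct a b) = lift (fcomp g fe) (map (fapp g) (oct a' b'))" by simp
  also have "\<dots> = lift fe (oct a' b')" by (rule lift_eqv)
  finally show ?thesis using lift_oct_fe[OF ab] by simp
qed

lemma fend_cyc: "c \<in> set cyc \<Longrightarrow> fend g c = g"
  using fend_eqv[of g fe c] cyc_fend by simp

lemma lift_aa: "lift g [a,a] = [pick g a, linv (pick g a)]"
proof -
  have "pick (fcomp g (tau (pick g a))) a = linv (pick g a)"
    by (rule pick_eq) (simp add: fapp_comp tau_side pick_side)
  then show ?thesis by simp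
qed

lemma fend_lift_aa: "fend g (lift g [a,a]) = g"
  unfolding lift_aa using fend_free[of g "pick g a"] by simp

lemma wstep_lift: "wstep r r' \<Longrightarrow> geq (lift f r) (lift f r')"
proof (induction rule: wstep.induct)
  case (wfree u a v)
  define g where "g = fend f (lift f u)"
  have e1: "lift f (u @ [a,a] @ v) = lift f u @ [pick g a, linv (pick g a)] @ lift g v"
    unfolding lift_app[of f u] lift_app[of _ "[a,a]"] g_def fend_lift_aa lift_aa
    by (simp add: fcomp_assoc tau_inv)
  have e2: "lift f (u @ v) = lift f u @ lift g v" unfolding lift_app g_def by simp
  show ?case unfolding e1 e2 by (rule geq_free)
next
  case (wrel a b u v)
  define g where "g = fend f (lift f u)"
  have c: "lift g (oct a b) \<in> set cyc" by (rule lift_oct[OF wrel(1)])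
  have e1: "lift f (u @ oct a b @ v) = lift f u @ lift g (oct a b) @ lift g v"
    unfolding lift_app[of f u] lift_app[of _ "oct a b"] g_def fend_cyc[OF c[unfolded g_def]] by simp
  have e2: "lift f (u @ v) = lift f u @ [] @ lift g v" unfolding lift_app g_def by simp
  show ?case unfolding e1 e2 by (rule geq_ctx[OF cyc_geq[OF c]])
qed

lemma weq_lift: "weq r r' \<Longrightarrow> geq (lift f r) (lift f r')"
  unfolding cl_def
proof (induction rule: rtranclp_induct)
  case base then show ?case by simp
next
  case (step y z)
  have "geq (lift f y) (lift f z)"
  proof (cases "wstep y z")
    case True then show ?thesis by (rule wstep_lift)
  next
    case False
    then have "wstep z y" using step(2) by simp
    then show ?thesis using wstep_lift geq_sym by blast
  qed
  then show ?case using step(3) geq_trans by blast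
qed

lemma wlen_glen: "wlen w = glen geq w"
  by (simp add: wlen_def glen_def)

lemma wlen_shadow: "wlen w = lw (shadow f w)"
proof -
  obtain v where v: "geq w v" "length v = wlen w"
    using glen_ex[of rstep w] unfolding wlen_glen geq_cl by blast
  have "weq (shadow f w) (shadow f v)" using geq_shadow[OF v(1)] by blast
  then have a: "lw (shadow f w) \<le> wlen w" using glen_le_rep v(2) by fastforce
  obtain r where r: "weq (shadow f w) r" "length r = lw (shadow f w)" using glen_ex by blast
  have "geq (lift f (shadow f w)) (lift f r)" by (rule weq_lift[OF r(1)])
  then have "geq w (lift f r)" by (simp add: lift_shadow)
  then have "glen (cl rstep) w \<le> length (lift f r)" by (intro glen_le_rep) (simp add: geq_cl)
  then have "wlen w \<le> length (lift f r)" by (simp add: wlen_glen geq_cl)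
  then show ?thesis using a r(2) by simp
qed

lemma wlen_cong: "geq a b \<Longrightarrow> wlen a = wlen b"
  unfolding wlen_glen geq_cl by (rule glen_cong)

lemma wlen_app: "wlen (a@b) \<le> wlen a + wlen b"
  unfolding wlen_glen geq_cl by (rule glen_app[of rstep, OF rstep_ctx])

lemma wlen_ex: "\<exists>v. geq w v \<and> length v = wlen w"
  using glen_ex[of rstep w] by (simp add: wlen_glen geq_cl)

lemma wlen_le: "wlen w \<le> length w"
  using glen_le[of rstep w] by (simp add: wlen_glen geq_cl)

lemma wstep_map: "wstep a b \<Longrightarrow> wstep (map (fapp g) a) (map (fapp g) b)"
proof (induction rule: wstep.induct)
  case (wfree u a v) show ?case using wstep.wfree[of "map (fapp g) u" "fapp g a" "map (fapp g) v"] by simp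
next
  case (wrel a b u v)
  have "adj (fapp g a) (fapp g b)" using wrel fapp_adj by simp
  then show ?case using wstep.wrel[of "fapp g a" "fapp g b" "map (fapp g) u" "map (fapp g) v"] by (simp add: map_oct)
qed

lemma weq_map: "weq a b \<Longrightarrow> weq (map (fapp g) a) (map (fapp g) b)"
  unfolding cl_def
proof (induction rule: rtranclp_induct)
  case base then show ?case by simp
next
  case (step y z)
  have "wstep y z \<or> wstep z y" using step(2) by simp
  then have "(sup wstep wstep\<inverse>\<inverse>) (map (fapp g) y) (map (fapp g) z)"
  proof
    assume "wstep y z" then show ?thesis using wstep_map[of y z g] by simp
  next
    assume "wstep z y" then show ?thesis using wstep_map[of z y g] by simp
  qed
  then show ?case using step(3) by (meson rtranclp.rtrancl_into_rtrancl)
qed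

lemma lw_map: "lw (map (fapp g) r) = lw r"
proof -
  have le: "lw (map (fapp h) x) \<le> lw x" for h x
  proof -
    obtain v where v: "weq x v" "length v = lw x" using glen_ex by blast
    show ?thesis using glen_le_rep[OF weq_map[OF v(1), of h]] v(2) by simp
  qed
  have "map (fapp (finv g)) (map (fapp g) r) = r" by (induction r) (auto simp: fapp_inv1)
  then have "lw r \<le> lw (map (fapp g) r)" using le[of "finv g" "map (fapp g) r"] by simp
  then show ?thesis using le[of g r] by simp
qed



definition subs :: "word list" where
  "subs = concat (map (\<lambda>c. map (\<lambda>i. take 4 (drop i c)) [0,1,2,3,4]) cyc)"

lemma len_cyc: "c \<in> set cyc \<Longrightarrow> length c = 8"
  unfolding cyc_def by (auto simp: relator_def relator_inv_def)

lemma rot_in_cyc: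
  assumes "r \<in> {relator, relator_inv}" shows "rotate k r \<in> set cyc"
proof -
  have l: "length r = 8" using assms by (auto simp: relator_def relator_inv_def)
  have e: "rotate k r = rotate (k mod 8) r" using rotate_conv_mod[of k r] l by simp
  have "k mod 8 < 8" by simp
  then have "k mod 8 \<in> {0,1,2,3,4,5,6,7}" by auto
  then show ?thesis using assms unfolding e cyc_def by (auto simp del: rotate_Suc)
qed

lemma piece_in_subs:
  assumes c: "c \<in> set cyc" and e: "c = p @ U @ s" and l: "length U = 4"
  shows "U \<in> set subs"
proof -
  have "length p \<le> 4" using len_cyc[OF c] e l by simp
  then have "length p < 5" by simp
  then have "length p = 0 \<or> length p = 1 \<or> length p = 2 \<or> length p = 3 \<or> length p = 4" by presburger
  then have lp: "length p \<in> {0,1,2,3,4}" by auto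
  have "U = take 4 (drop (length p) c)" using e l by simp
  then show ?thesis unfolding subs_def using c lp by force
qed

definition okU :: "word \<Rightarrow> bool" where
  "okU U \<longleftrightarrow> (case shadow fe U of [a,b,c,d] \<Rightarrow> adj a b \<and> c = a \<and> d = b | _ \<Rightarrow> False)"

lemma okU_all: "list_all okU subs"
  unfolding subs_def cyc_def
  by (simp add: relator_def relator_inv_def fe_def lt_def rot_simps adj_def okU_def)

lemma subs_shadow: "U \<in> set subs \<Longrightarrow> \<exists>a b. adj a b \<and> shadow fe U = [a,b,a,b]"
proof -
  assume "U \<in> set subs"
  then have "okU U" using okU_all by (simp add: list_all_iff)
  then show ?thesis unfolding okU_def
    by (auto split: list.splits)
qed

lemma inR_shadow:
  assumes "inR [u1,u2,u3,u4]"
  shows "\<exists>a b. adj a b \<and> shadow fe [u1,u2,u3,u4] = [a,b,a,b]"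
proof -
  obtain r k p s where r: "r \<in> {relator, relator_inv}" and e: "rotate k r = p @ [u1,u2,u3,u4] @ s"
    using assms unfolding inR_def by blast
  have "[u1,u2,u3,u4] \<in> set subs" using piece_in_subs[OF rot_in_cyc[OF r] e] by simp
  then show ?thesis by (rule subs_shadow)
qed

lemma normalize_pair:
  assumes "adj a b" shows "\<exists>h. fapp h a = A0 \<and> fapp h b = A1"
proof -
  have "fapp (if (ix b - ix a) mod 8 = 1 then (True, lt (- ix a)) else (False, a)) a = A0 \<and>
        fapp (if (ix b - ix a) mod 8 = 1 then (True, lt (- ix a)) else (False, a)) b = A1"
    using assms by (cases a; cases b) (simp_all add: adj_def lt_def)
  then show ?thesis by blast
qed

lemma map_map_fapp: "map (fapp h) (map (fapp f) x) = map (fapp (fcomp h f)) x"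
  by (simp add: fapp_comp)

lemma part1:
  assumes R: "inR U" and lU: "length U = 4" and wU: "wlen U = 4"
    and cy: "wlen (y @ U) = wlen y + 4"
    and gz: "geodesic (U @ z)" and gw: "geodesic w" and wy: "geq w y"
  shows "geodesic (w @ U @ z)"
proof -
  obtain u1 u2 u3 u4 where U: "U = [u1,u2,u3,u4]" using lU
    by (auto simp: length_Suc_conv numeral_eq_Suc)
  obtain a b where ab: "adj a b" "shadow fe U = [a,b,a,b]" using inR_shadow R U by blast
  define f where "f = fend fe w"
  have ab': "adj (fapp f a) (fapp f b)" using ab(1) fapp_adj by simp
  obtain h where h: "fapp h (fapp f a) = A0" "fapp h (fapp f b) = A1" using normalize_pair[OF ab'] by blast
  define Sw where "Sw = shadow fe w"
  define Sz where "Sz = shadow (fend fe U) z"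
  have sUz: "shadow fe (U@z) = [a,b,a,b] @ Sz" unfolding Sz_def shadow_app ab(2) ..
  have sf: "shadow f x = map (fapp f) (shadow fe x)" for x using shadow_eqv[of f fe x] by simp
  define Y where "Y = map (fapp h) Sw"
  define Z where "Z = map (fapp (fcomp h f)) Sz"
  have hw0: "map (fapp (fcomp h f)) [a,b,a,b] = w0" using h by (simp add: fapp_comp)
  have e1: "map (fapp h) (shadow fe (w@U@z)) = Y @ w0 @ Z"
  proof -
    have "shadow fe (w@U@z) = Sw @ map (fapp f) ([a,b,a,b] @ Sz)"
      unfolding shadow_app[of fe w] Sw_def f_def[symmetric] sf sUz ..
    then show ?thesis unfolding Y_def Z_def using h by (simp add: fapp_comp)
  qed
  have lY: "lw Y = wlen w" unfolding Y_def Sw_def using lw_map wlen_shadow by metis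
  have "wlen (w@U) = wlen (y@U)" using wlen_cong geq_app[OF wy geq_refl] by blast
  then have wwu: "wlen (w@U) = wlen w + 4" using cy wlen_cong[OF wy] by simp
  have "map (fapp h) (shadow fe (w@U)) = Y @ w0"
  proof -
    have "shadow fe (w@U) = Sw @ map (fapp f) [a,b,a,b]"
      unfolding shadow_app[of fe w] Sw_def f_def[symmetric] sf ab(2) ..
    then show ?thesis unfolding Y_def using h by (simp add: fapp_comp)
  qed
  then have h1: "lw (Y @ w0) = lw Y + 4" using lw_map[of h "shadow fe (w@U)"] wlen_shadow[of "w@U" fe] wwu lY
    by simp
  have "map (fapp (fcomp h f)) (shadow fe (U@z)) = w0 @ Z" unfolding sUz Z_def using hw0 by simp
  then have "lw (w0 @ Z) = wlen (U@z)" using lw_map[of "fcomp h f" "shadow fe (U@z)"] wlen_shadow[of "U@z" fe]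
    by simp
  moreover have "wlen (U@z) = 4 + length z" using gz lU unfolding geodesic_def by simp
  moreover have "length Z = length z" unfolding Z_def Sz_def by simp
  ultimately have h2: "lw (w0 @ Z) = 4 + length Z" by simp
  have "lw (Y @ w0 @ Z) = lw Y + 4 + length Z" by (rule wlemma[OF h1 h2])
  moreover have "wlen (w@U@z) = lw (Y @ w0 @ Z)"
    using wlen_shadow[of "w@U@z" fe] lw_map[of h "shadow fe (w@U@z)"] e1 by simp
  ultimately have "wlen (w@U@z) = wlen w + 4 + length z" using lY \<open>length Z = length z\<close> by simp
  then show ?thesis using gw lU unfolding geodesic_def by simp
qed

theorem lemma3p3:
  fixes u1 u2 u3 u4 :: letter and y :: word
  assumes "geodesic [u1, u2, u3, u4]"
    and "inR [u1, u2, u3, u4]"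
    and "\<not> geq y []"
    and "[u1, u2, u3, u4] \<in> cone y"
  shows "(\<forall>z. geodesic ([u1, u2, u3, u4] @ z) \<longrightarrow>
            (\<forall>w. geodesic w \<and> geq w y \<longrightarrow> geodesic (w @ [u1, u2, u3, u4] @ z)))
       \<and> cone [u1, u2, u3, u4] = cone (y @ [u1, u2, u3, u4])"
proof -
  define U where "U = [u1, u2, u3, u4]"
  have lU: "length U = 4" unfolding U_def by simp
  have wU: "wlen U = 4" using assms(1) unfolding U_def geodesic_def by simp
  have cy: "wlen (y @ U) = wlen y + 4" using assms(4) wU unfolding U_def cone_def by simp
  have R: "inR U" using assms(2) unfolding U_def .
  have P1: "\<forall>z. geodesic (U @ z) \<longrightarrow> (\<forall>w. geodesic w \<and> geq w y \<longrightarrow> geodesic (w @ U @ z))"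
    using part1[OF R lU wU cy] by blast
  have P2: "cone U = cone (y @ U)"
  proof (rule set_eqI)
    fix z
    show "z \<in> cone U \<longleftrightarrow> z \<in> cone (y @ U)"
    proof
      assume "z \<in> cone U"
      then have hz: "wlen (U @ z) = 4 + wlen z" using wU unfolding cone_def by simp
      obtain z' where z': "geq z z'" "length z' = wlen z" using wlen_ex by blast
      obtain w where w: "geq y w" "length w = wlen y" using wlen_ex by blast
      have gw: "geodesic w" using w wlen_cong[OF w(1)] unfolding geodesic_def by simp
      have "wlen (U @ z') = wlen (U @ z)" using wlen_cong[OF geq_app[OF geq_refl z'(1)]] by simp
      then have gz: "geodesic (U @ z')" using hz z'(2) lU unfolding geodesic_def by simp
      have "geodesic (w @ U @ z')" using P1 gz gw geq_sym[OF w(1)] by blast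
      then have "wlen (w @ U @ z') = wlen y + 4 + wlen z" using w(2) z'(2) lU unfolding geodesic_def by simp
      moreover have "wlen (y @ U @ z) = wlen (w @ U @ z')"
        using wlen_cong[OF geq_app[OF w(1) geq_app[OF geq_refl z'(1)]]] .
      ultimately show "z \<in> cone (y @ U)" using cy unfolding cone_def by simp
    next
      assume "z \<in> cone (y @ U)"
      then have h: "wlen (y @ U @ z) = wlen y + 4 + wlen z" using cy unfolding cone_def by simp
      have "wlen (y @ (U @ z)) \<le> wlen y + wlen (U @ z)" by (rule wlen_app)
      moreover have "wlen (U @ z) \<le> wlen U + wlen z" by (rule wlen_app)
      ultimately have "wlen (U @ z) = 4 + wlen z" using h wU by simp
      then show "z \<in> cone U" using wU unfolding cone_def by simp
    qed
  qed
  show ?thesis using P1 P2 unfolding U_def by blast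
qed

end
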